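(* In the standing setting, if $0<\mu_1\le\mu_0$ then $$\|x_{\mu_1}\|_{x_{\mu_0}}\le\nu,\qquad \|s_{\mu_1}\|_{s_{\mu_0}}\le\nu .$$ Consequently, for every limit point $x_*$ of $x_\mu$ and every limit point $s_*$ of $s_\mu$ as $\mu\to0$, $\|x_*\|_B\le\nu$ and $\|s_*\|_B\le\nu$. Moreover, for every $\mu\in(0,1]$, $$\tfrac1{4\nu^2}B\preceq\nabla^2F(x_\mu)\preceq\tfrac{4\nu^2}{\mu^2}B,\qquad \tfrac1{4\nu^2}B^{-1}\preceq\nabla^2F_*(s_\mu)\preceq\tfrac{4\nu^2}{\mu^2}B^{-1}.$$
   Context: Standing setting: $\mathbb E,\mathbb H$ finite-dimensional real spaces with duals, pairing $\langle\cdot,\cdot\rangle$; $K\subset\mathbb E$ a regular cone with dual cone $K^*$; $F$ a $\nu$-normal barrier for $K$ (a $\nu$-self-concordant barrier on $\operatorname{int}K$ with $F(\tau x)=F(x)-\nu\ln\tau$) and $F_*(s)=\max_{x\in\operatorname{int}K}\{-\langle s,x\rangle-F(x)\}$ its dual barrier on $\operatorname{int}K^*$. $A:\mathbb E\to\mathbb H^*$ linear, $c\in\mathbb E^*$, $b\in\mathbb H^*$; primal $\min\{\langle c,x\rangle:Ax=b,x\in K\}$, dual $\max\{\langle b,y\rangle:s+A^*y=c,s\in K^*\}$, both strictly feasible. The central path is, for $\mu>0$, the unique $(x_\mu,s_\mu,y_\mu)$ with $Ax_\mu=b$, $s_\mu+A^*y_\mu=c$, $s_\mu=-\mu\nabla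 F(x_\mu)$ (equivalently $x_\mu=-\mu\nabla F_*(s_\mu)$). Local norms: $\|u\|_x=\langle\nabla^2F(x)u,u\rangle^{1/2}$ for $x\in\operatorname{int}K,u\in\mathbb E$; $\|s\|_{s'}=\langle s,\nabla^2F_*(s')s\rangle^{1/2}$ for $s'\in\operatorname{int}K^*,s\in\mathbb E^*$. $B=\nabla^2F(x_1)$ (Hessian at the primal central point with $\mu=1$), $\|x\|_B=\langle Bx,x\rangle^{1/2}$ for $x\in\mathbb E$, $\|s\|_B=\langle s,B^{-1}s\rangle^{1/2}$ for $s\in\mathbb E^*$; $\preceq$ is the Löwner order. *)

theory Defs
  imports "HOL-Analysis.Analysis"
begin

text \<open>The finite-dimensional real spaces E and H are modelled by
  euclidean spaces; the dual spaces are identified with the spaces themselves via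
  the inner product, so the pairing is the inner product. Second derivatives are
  represented as (self-)linear operators: the Hessian of F at x is the linear map
  hF x with hF x u = Hessian(x) u.\<close>

definition dual_cone :: "'a::real_inner set \<Rightarrow> 'a set" where
  "dual_cone K = {s. \<forall>x\<in>K. 0 \<le> inner s x}"

definition regular_cone :: "'a::euclidean_space set \<Rightarrow> bool" where
  "regular_cone K \<longleftrightarrow> closed K \<and> convex K \<and> cone K \<and> interior K \<noteq> {}
     \<and> K \<inter> uminus ` K = {0}"

text \<open>nu-self-concordant barrier on an open convex set Q, with gradient g,
  Hessian h and third derivative d3 (d3 x u v = D^3 F(x)[u,v,-]).\<close>
definition sc_barrier ::
  "'a::euclidean_space set \<Rightarrow> ('a \<Rightarrow> real) \<Rightarrow> ('a \<Rightarrow> 'a) \<Rightarrow> ('a \<Rightarrow> 'a \<Rightarrow> 'a)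
    \<Rightarrow> ('a \<Rightarrow> 'a \<Rightarrow> 'a \<Rightarrow> 'a) \<Rightarrow> real \<Rightarrow> bool" where
  "sc_barrier Q F g h d3 \<nu> \<longleftrightarrow>
     open Q \<and> convex Q \<and> Q \<noteq> {} \<and>
     (\<forall>x\<in>Q. (F has_derivative (\<lambda>u. inner (g x) u)) (at x)) \<and>
     (\<forall>x\<in>Q. (g has_derivative h x) (at x)) \<and>
     (\<forall>x\<in>Q. \<forall>u. ((\<lambda>y. h y u) has_derivative d3 x u) (at x)) \<and>
     (\<forall>u v. continuous_on Q (\<lambda>y. d3 y u v)) \<and>
     (\<forall>x\<in>Q. \<forall>u. 0 \<le> inner (h x u) u) \<and>
     (\<forall>z\<in>frontier Q. filterlim F at_top (at z within Q)) \<and>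
     (\<forall>x\<in>Q. \<forall>u. \<bar>inner (d3 x u u) u\<bar> \<le> 2 * (inner (h x u) u) powr (3/2)) \<and>
     (\<forall>x\<in>Q. \<forall>u. (inner (g x) u)\<^sup>2 \<le> \<nu> * inner (h x u) u)"

definition normal_barrier ::
  "'a::euclidean_space set \<Rightarrow> ('a \<Rightarrow> real) \<Rightarrow> ('a \<Rightarrow> 'a) \<Rightarrow> ('a \<Rightarrow> 'a \<Rightarrow> 'a)
    \<Rightarrow> ('a \<Rightarrow> 'a \<Rightarrow> 'a \<Rightarrow> 'a) \<Rightarrow> real \<Rightarrow> bool" where
  "normal_barrier K F g h d3 \<nu> \<longleftrightarrow>
     sc_barrier (interior K) F g h d3 \<nu> \<and>
     (\<forall>x\<in>interior K. \<forall>\<tau>>0. F (\<tau> *\<^sub>R x) = F x - \<nu> * ln \<tau>)"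

definition local_norm :: "('a::real_inner \<Rightarrow> 'a \<Rightarrow> 'a) \<Rightarrow> 'a \<Rightarrow> 'a \<Rightarrow> real" where
  "local_norm H p u = sqrt (inner (H p u) u)"

definition op_norm_B :: "('a::real_inner \<Rightarrow> 'a) \<Rightarrow> 'a \<Rightarrow> real" where
  "op_norm_B B u = sqrt (inner (B u) u)"

definition loewner_le :: "('a::real_inner \<Rightarrow> 'a) \<Rightarrow> ('a \<Rightarrow> 'a) \<Rightarrow> bool" where
  "loewner_le P Q \<longleftrightarrow> (\<forall>u. inner (P u) u \<le> inner (Q u) u)"

definition limit_point_at0 :: "(real \<Rightarrow> 'a::metric_space) \<Rightarrow> 'a \<Rightarrow> bool" where
  "limit_point_at0 p z \<longleftrightarrow>
     (\<exists>m::nat \<Rightarrow> real. (\<forall>k. 0 < m k) \<and> m \<longlonglongrightarrow> 0 \<and> (\<lambda>k. p (m k)) \<longlonglongrightarrow> z)"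

end

theory Submission
  imports Defs
begin
locale nbar =
  fixes K :: "'e::euclidean_space set" and F :: "'e \<Rightarrow> real" and g :: "'e \<Rightarrow> 'e"
    and h :: "'e \<Rightarrow> 'e \<Rightarrow> 'e" and d3 :: "'e \<Rightarrow> 'e \<Rightarrow> 'e \<Rightarrow> 'e" and \<nu> :: real
  assumes rc: "regular_cone K" and nb: "normal_barrier K F g h d3 \<nu>"
begin

lemma openQ: "open (interior K)" by simp
lemma convexQ: "convex (interior K)" using nb unfolding normal_barrier_def sc_barrier_def by auto
lemma Qne: "interior K \<noteq> {}" using nb unfolding normal_barrier_def sc_barrier_def by auto
lemma Fder: "x \<in> interior K \<Longrightarrow> (F has_derivative (\<lambda>u. inner (g x) u)) (at x)"
  using nb unfolding normal_barrier_def sc_barrier_def by auto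
lemma gder: "x \<in> interior K \<Longrightarrow> (g has_derivative h x) (at x)"
  using nb unfolding normal_barrier_def sc_barrier_def by auto
lemma hder: "x \<in> interior K \<Longrightarrow> ((\<lambda>y. h y u) has_derivative d3 x u) (at x)"
  using nb unfolding normal_barrier_def sc_barrier_def by auto
lemma psd: "x \<in> interior K \<Longrightarrow> 0 \<le> inner (h x u) u"
  using nb unfolding normal_barrier_def sc_barrier_def by auto
lemma blowup: "z \<in> frontier (interior K) \<Longrightarrow> filterlim F at_top (at z within interior K)"
  using nb unfolding normal_barrier_def sc_barrier_def by auto
lemma sc: "x \<in> interior K \<Longrightarrow> \<bar>inner (d3 x u u) u\<bar> \<le> 2 * (inner (h x u) u) powr (3/2)"
  using nb unfolding normal_barrier_def sc_barrier_def by auto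
lemma nuineq: "x \<in> interior K \<Longrightarrow> (inner (g x) u)\<^sup>2 \<le> \<nu> * inner (h x u) u"
  using nb unfolding normal_barrier_def sc_barrier_def by auto
lemma homog: "x \<in> interior K \<Longrightarrow> \<tau> > 0 \<Longrightarrow> F (\<tau> *\<^sub>R x) = F x - \<nu> * ln \<tau>"
  using nb unfolding normal_barrier_def by auto
lemma closedK: "closed K" and convexK: "convex K" and coneK: "cone K"
  and pointed: "K \<inter> uminus ` K = {0}"
  using rc unfolding regular_cone_def by auto

lemma hlin: "x \<in> interior K \<Longrightarrow> linear (h x)"
  using gder has_derivative_linear by blast

lemma K_add: "a \<in> K \<Longrightarrow> b \<in> K \<Longrightarrow> a + b \<in> K"
proof -
  assume a: "a \<in> K" and b: "b \<in> K"
  have "(1/2) *\<^sub>R a + (1/2) *\<^sub>R b \<in> K" using convexK a b unfolding convex_def by auto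
  then have "2 *\<^sub>R ((1/2) *\<^sub>R a + (1/2) *\<^sub>R b) \<in> K" using coneK unfolding cone_def by auto
  then show ?thesis by (simp add: scaleR_add_right)
qed

lemma Q_scale: "x \<in> interior K \<Longrightarrow> c > 0 \<Longrightarrow> c *\<^sub>R x \<in> interior K"
proof -
  assume x: "x \<in> interior K" and c: "c > 0"
  obtain e where e: "e > 0" "ball x e \<subseteq> K" using x by (meson mem_interior)
  have "ball (c *\<^sub>R x) (c * e) \<subseteq> K"
  proof
    fix y assume y: "y \<in> ball (c *\<^sub>R x) (c * e)"
    have "dist x ((1/c) *\<^sub>R y) = dist (c *\<^sub>R x) y / c"
    proof -
      have "x - (1/c) *\<^sub>R y = (1/c) *\<^sub>R (c *\<^sub>R x - y)" using c by (simp add: algebra_simps)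
      then show ?thesis using c by (simp add: dist_norm)
    qed
    also have "\<dots> < e" using y c by (simp add: field_simps mult.commute)
    finally have "(1/c) *\<^sub>R y \<in> K" using e by auto
    then have "c *\<^sub>R ((1/c) *\<^sub>R y) \<in> K" using coneK c unfolding cone_def by (metis less_eq_real_def)
    then show "y \<in> K" using c by simp
  qed
  then show ?thesis using c e by (meson mem_interior mult_pos_pos)
qed

lemma Q_add: "x \<in> interior K \<Longrightarrow> y \<in> K \<Longrightarrow> x + y \<in> interior K"
proof -
  assume x: "x \<in> interior K" and y: "y \<in> K"
  obtain e where e: "e > 0" "ball x e \<subseteq> K" using x by (meson mem_interior)
  have "ball (x + y) e \<subseteq> K"
  proof
    fix z assume z: "z \<in> ball (x + y) e"
    have "z - y \<in> ball x e" using z by (simp add: dist_norm algebra_simps)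
    then have "z - y \<in> K" using e by auto
    from K_add[OF this y] show "z \<in> K" by simp
  qed
  then show ?thesis using e by (meson mem_interior)
qed

lemma QK: "interior K \<subseteq> K" by (rule interior_subset)

end

lemma line_vec:
  assumes "(f has_derivative f') (at (x + t *\<^sub>R y))"
  shows "((\<lambda>t. f (x + t *\<^sub>R y)) has_vector_derivative f' y) (at t)"
proof -
  have l: "linear f'" using assms has_derivative_linear by blast
  have "((\<lambda>t. x + t *\<^sub>R y) has_derivative (\<lambda>s. s *\<^sub>R y)) (at t)"
    by (auto intro!: derivative_eq_intros)
  from has_derivative_compose[OF this assms]
  have "((\<lambda>t. f (x + t *\<^sub>R y)) has_derivative (\<lambda>s. f' (s *\<^sub>R y))) (at t)" .
  moreover have "(\<lambda>s. f' (s *\<^sub>R y)) = (\<lambda>s. s *\<^sub>R f' y)" using l by (simp add: linear_scale)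
  ultimately show ?thesis unfolding has_vector_derivative_def by simp
qed

lemma line_real:
  fixes f :: "'a::real_normed_vector \<Rightarrow> real"
  assumes "(f has_derivative f') (at (x + t *\<^sub>R y))"
  shows "((\<lambda>t. f (x + t *\<^sub>R y)) has_real_derivative f' y) (at t)"
  using line_vec[OF assms] by (simp add: has_real_derivative_iff_has_vector_derivative)

context nbar begin

lemma dF: "x + t *\<^sub>R y \<in> interior K \<Longrightarrow>
   ((\<lambda>t. F (x + t *\<^sub>R y)) has_real_derivative inner (g (x + t *\<^sub>R y)) y) (at t)"
  using line_real[OF Fder] .

lemma dg: "x + t *\<^sub>R y \<in> interior K \<Longrightarrow>
   ((\<lambda>t. inner (g (x + t *\<^sub>R y)) u) has_real_derivative inner (h (x + t *\<^sub>R y) y) u) (at t)"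
  using line_real[OF has_derivative_inner_left[OF gder]] .

lemma dh: "x + t *\<^sub>R y \<in> interior K \<Longrightarrow>
   ((\<lambda>t. inner (h (x + t *\<^sub>R y) v) u) has_real_derivative inner (d3 (x + t *\<^sub>R y) v y) u) (at t)"
  using line_real[OF has_derivative_inner_left[OF hder]] .

lemma dgv: "x + t *\<^sub>R y \<in> interior K \<Longrightarrow>
   ((\<lambda>t. g (x + t *\<^sub>R y)) has_vector_derivative h (x + t *\<^sub>R y) y) (at t)"
  using line_vec[OF gder] .

end

lemma inner_zero_all: "(\<And>u. inner (v::'a::real_inner) u = 0) \<Longrightarrow> v = 0"
  by (metis inner_eq_zero_iff)

context nbar begin

lemma g_hom: assumes x: "x \<in> interior K" and t: "\<tau> > 0"
  shows "\<tau> *\<^sub>R g (\<tau> *\<^sub>R x) = g x"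
proof -
  have d1: "((\<lambda>z. F (\<tau> *\<^sub>R z)) has_derivative (\<lambda>u. inner (g (\<tau> *\<^sub>R x)) (\<tau> *\<^sub>R u))) (at x)"
  proof -
    have "((\<lambda>z. \<tau> *\<^sub>R z) has_derivative (\<lambda>u. \<tau> *\<^sub>R u)) (at x)" by (auto intro!: derivative_eq_intros)
    from has_derivative_compose[OF this Fder[OF Q_scale[OF x t]]] show ?thesis .
  qed
  have d2: "((\<lambda>z. F z - \<nu> * ln \<tau>) has_derivative (\<lambda>u. inner (g x) u)) (at x)"
    using Fder[OF x] by (auto intro!: derivative_eq_intros)
  have d3': "((\<lambda>z. F (\<tau> *\<^sub>R z)) has_derivative (\<lambda>u. inner (g x) u)) (at x)"
    by (rule has_derivative_transform_within_open[OF d2 openQ x]) (simp add: homog t)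
  from has_derivative_unique[OF d1 d3']
  have "\<And>u. inner (g (\<tau> *\<^sub>R x)) (\<tau> *\<^sub>R u) = inner (g x) u" by metis
  then have "\<And>u. inner (\<tau> *\<^sub>R g (\<tau> *\<^sub>R x) - g x) u = 0" by (simp add: inner_diff_left)
  then show ?thesis using inner_zero_all[of "\<tau> *\<^sub>R g (\<tau> *\<^sub>R x) - g x"] by simp
qed

lemma g_hom': "x \<in> interior K \<Longrightarrow> \<tau> > 0 \<Longrightarrow> g (\<tau> *\<^sub>R x) = (1/\<tau>) *\<^sub>R g x"
proof -
  assume x: "x \<in> interior K" and t: "\<tau> > 0"
  have "g (\<tau> *\<^sub>R x) = (1/\<tau>) *\<^sub>R (\<tau> *\<^sub>R g (\<tau> *\<^sub>R x))" using t by simp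
  then show ?thesis using g_hom[OF x t] by simp
qed

lemma gx: assumes x: "x \<in> interior K" shows "inner (g x) x = - \<nu>"
proof -
  have d1: "((\<lambda>t. F (x + t *\<^sub>R x)) has_real_derivative inner (g (x + 0 *\<^sub>R x)) x) (at 0)"
    by (rule dF) (simp add: x)
  have d2: "((\<lambda>t. F x - \<nu> * ln (1 + t)) has_real_derivative - \<nu>) (at 0)"
    by (auto intro!: derivative_eq_intros)
  have "((\<lambda>t. F (x + t *\<^sub>R x)) has_real_derivative - \<nu>) (at 0)"
  proof (rule has_field_derivative_transform_within_open[OF d2, of "{-1<..}"])
    fix t :: real assume "t \<in> {-1<..}"
    then have "1 + t > 0" by simp
    then have "F ((1+t) *\<^sub>R x) = F x - \<nu> * ln (1+t)" using homog[OF x] by blast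
    then show "F x - \<nu> * ln (1 + t) = F (x + t *\<^sub>R x)" by (simp add: algebra_simps)
  qed auto
  from DERIV_unique[OF d1 this] show ?thesis by simp
qed

lemma hx: assumes x: "x \<in> interior K" shows "h x x = - g x"
proof -
  have d1: "((\<lambda>t. g (x + t *\<^sub>R x)) has_vector_derivative h (x + 0 *\<^sub>R x) x) (at 0)"
    by (rule dgv) (simp add: x)
  have d2: "((\<lambda>t. (1 / (1 + t)) *\<^sub>R g x) has_vector_derivative - g x) (at 0)"
  proof -
    have "((\<lambda>t. 1 / (1 + t)) has_real_derivative -1) (at 0)"
      by (auto intro!: derivative_eq_intros)
    from has_vector_derivative_scaleR[OF this has_vector_derivative_const[of "g x"]]
    show ?thesis by simp
  qed
  have "((\<lambda>t. g (x + t *\<^sub>R x)) has_vector_derivative - g x) (at 0)"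
    unfolding has_vector_derivative_def
  proof (rule has_derivative_transform_within_open[OF d2[unfolded has_vector_derivative_def], of "{-1<..}"])
    fix t :: real assume "t \<in> {-1<..}"
    then have "1 + t > 0" by simp
    then have "g ((1+t) *\<^sub>R x) = (1/(1+t)) *\<^sub>R g x" using g_hom'[OF x] by blast
    then show "(1 / (1 + t)) *\<^sub>R g x = g (x + t *\<^sub>R x)" by (simp add: algebra_simps)
  qed auto
  from vector_derivative_unique_at[OF d1 this] show ?thesis by simp
qed

lemma qx: "x \<in> interior K \<Longrightarrow> inner (h x x) x = \<nu>"
  using hx gx by simp

lemma nu_nonneg: "\<nu> \<ge> 0"
proof -
  obtain x where "x \<in> interior K" using Qne by auto
  then show ?thesis using qx psd by metis
qed

lemma h_hom: assumes x: "x \<in> interior K" and t: "\<tau> > 0"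
  shows "h (\<tau> *\<^sub>R x) u = (1/\<tau>^2) *\<^sub>R h x u"
proof -
  have tx: "\<tau> *\<^sub>R x \<in> interior K" using Q_scale[OF x t] .
  have d1: "((\<lambda>z. \<tau> *\<^sub>R g (\<tau> *\<^sub>R z)) has_derivative (\<lambda>u. \<tau> *\<^sub>R h (\<tau> *\<^sub>R x) (\<tau> *\<^sub>R u))) (at x)"
  proof -
    have "((\<lambda>z. \<tau> *\<^sub>R z) has_derivative (\<lambda>u. \<tau> *\<^sub>R u)) (at x)" by (auto intro!: derivative_eq_intros)
    from has_derivative_compose[OF this gder[OF tx]]
    have "((\<lambda>z. g (\<tau> *\<^sub>R z)) has_derivative (\<lambda>u. h (\<tau> *\<^sub>R x) (\<tau> *\<^sub>R u))) (at x)" .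
    then show ?thesis by (auto intro!: derivative_eq_intros)
  qed
  have d2: "((\<lambda>z. \<tau> *\<^sub>R g (\<tau> *\<^sub>R z)) has_derivative h x) (at x)"
    by (rule has_derivative_transform_within_open[OF gder[OF x] openQ x]) (simp add: g_hom t)
  from has_derivative_unique[OF d1 d2]
  have "\<tau> *\<^sub>R h (\<tau> *\<^sub>R x) (\<tau> *\<^sub>R u) = h x u" by metis
  moreover have "h (\<tau> *\<^sub>R x) (\<tau> *\<^sub>R u) = \<tau> *\<^sub>R h (\<tau> *\<^sub>R x) u"
    using hlin[OF tx] by (simp add: linear_scale)
  ultimately have "(\<tau>^2) *\<^sub>R h (\<tau> *\<^sub>R x) u = h x u" by (simp add: power2_eq_square)
  moreover have "h (\<tau> *\<^sub>R x) u = (1/\<tau>^2) *\<^sub>R ((\<tau>^2) *\<^sub>R h (\<tau> *\<^sub>R x) u)" using t by simp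
  ultimately show ?thesis by simp
qed

end

context nbar begin

lemma seg: "a \<in> interior K \<Longrightarrow> b \<in> interior K \<Longrightarrow> 0 \<le> t \<Longrightarrow> t \<le> 1 \<Longrightarrow> a + t *\<^sub>R (b - a) \<in> interior K"
proof -
  assume a: "a \<in> interior K" and b: "b \<in> interior K" and t: "0 \<le> t" "t \<le> 1"
  have "(1 - t) *\<^sub>R a + t *\<^sub>R b \<in> interior K" using convexQ a b t unfolding convex_def by auto
  moreover have "(1 - t) *\<^sub>R a + t *\<^sub>R b = a + t *\<^sub>R (b - a)" by (simp add: algebra_simps)
  ultimately show ?thesis by simp
qed

lemma mono_seg: assumes a: "a \<in> interior K" and b: "b \<in> interior K"
  shows "inner (g a) (b - a) \<le> inner (g b) (b - a)"
proof -
  have "(\<lambda>t. inner (g (a + t *\<^sub>R (b - a))) (b - a)) 0 \<le> (\<lambda>t. inner (g (a + t *\<^sub>R (b - a))) (b - a)) 1"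
  proof (rule DERIV_nonneg_imp_nondecreasing[of 0 1 "\<lambda>t. inner (g (a + t *\<^sub>R (b - a))) (b - a)"])
    fix t :: real assume "0 \<le> t" "t \<le> 1"
    then have m: "a + t *\<^sub>R (b - a) \<in> interior K" using seg a b by blast
    show "\<exists>y. ((\<lambda>t. inner (g (a + t *\<^sub>R (b - a))) (b - a)) has_real_derivative y) (at t) \<and> 0 \<le> y"
      by (intro exI conjI) (rule dg[OF m], rule psd[OF m])
  qed simp
  then show ?thesis by simp
qed

lemma conv_seg: assumes a: "a \<in> interior K" and b: "b \<in> interior K"
  shows "F a + inner (g a) (b - a) \<le> F b"
proof -
  let ?y = "b - a"
  have "\<exists>z. 0 < z \<and> z < 1 \<and> F (a + 1 *\<^sub>R ?y) - F (a + 0 *\<^sub>R ?y) = (1 - 0) * inner (g (a + z *\<^sub>R ?y)) ?y"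
  proof (rule MVT2[of 0 1 "\<lambda>t. F (a + t *\<^sub>R ?y)" "\<lambda>t. inner (g (a + t *\<^sub>R ?y)) ?y"])
    fix t :: real assume "0 \<le> t" "t \<le> 1"
    then have m: "a + t *\<^sub>R (b - a) \<in> interior K" using seg a b by blast
    show "((\<lambda>t. F (a + t *\<^sub>R ?y)) has_real_derivative inner (g (a + t *\<^sub>R ?y)) ?y) (at t)"
      using dF[OF m] .
  qed simp
  then obtain z where z: "0 < z" "z < 1" "F b - F a = inner (g (a + z *\<^sub>R ?y)) ?y" by auto
  have m: "a + z *\<^sub>R ?y \<in> interior K" using seg a b z by auto
  have "inner (g a) (z *\<^sub>R ?y) \<le> inner (g (a + z *\<^sub>R ?y)) (z *\<^sub>R ?y)"
    using mono_seg[OF a m] by simp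
  then have "z * inner (g a) ?y \<le> z * inner (g (a + z *\<^sub>R ?y)) ?y" by simp
  then have "inner (g a) ?y \<le> inner (g (a + z *\<^sub>R ?y)) ?y" using z by simp
  then show ?thesis using z by simp
qed

lemma recession_Q: assumes z: "z \<in> interior K" and y: "y \<in> interior K"
  shows "inner (g z) y \<le> 0"
proof (rule ccontr)
  let ?a = "inner (g z) y" and ?c = "inner (g y) z"
  assume "\<not> ?a \<le> 0"
  then have a: "?a > 0" by simp
  define l where "l = sqrt ((\<bar>?c\<bar> + 1) / ?a)"
  have l0: "l > 0" using a by (simp add: l_def)
  have l2: "l^2 * ?a = \<bar>?c\<bar> + 1" using a by (simp add: l_def)
  have w: "l *\<^sub>R y \<in> interior K" using Q_scale[OF y l0] .
  have "inner (g z) (l *\<^sub>R y - z) \<le> inner (g (l *\<^sub>R y)) (l *\<^sub>R y - z)" using mono_seg[OF z w] .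
  moreover have "inner (g (l *\<^sub>R y)) (l *\<^sub>R y - z) = - \<nu> - ?c / l"
  proof -
    have "inner (g (l *\<^sub>R y)) (l *\<^sub>R y) = - \<nu>" using gx[OF w] .
    moreover have "inner (g (l *\<^sub>R y)) z = ?c / l" using g_hom'[OF y l0] by simp
    ultimately show ?thesis by (simp add: inner_diff_right)
  qed
  moreover have "inner (g z) (l *\<^sub>R y - z) = l * ?a + \<nu>" using gx[OF z] by (simp add: inner_diff_right)
  ultimately have "l * ?a + \<nu> \<le> - \<nu> - ?c / l" by simp
  moreover have "- ?c / l \<le> \<bar>?c\<bar> / l"
  proof -
    have "-?c \<le> \<bar>?c\<bar>" by simp
    from divide_right_mono[OF this, of l] l0 show ?thesis by simp
  qed
  ultimately have "l * ?a \<le> \<bar>?c\<bar> / l" using nu_nonneg by linarith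
  then have "l * (l * ?a) \<le> \<bar>?c\<bar>" using l0 by (simp add: field_simps)
  then show False using l2 by (simp add: power2_eq_square algebra_simps)
qed

lemma recession: assumes z: "z \<in> interior K" and y: "y \<in> K"
  shows "inner (g z) y \<le> 0"
proof (rule ccontr)
  let ?a = "inner (g z) y"
  assume "\<not> ?a \<le> 0"
  then have a: "?a > 0" by simp
  define e where "e = ?a / (\<nu> + 1)"
  have e0: "e > 0" using a nu_nonneg by (simp add: e_def)
  have "e *\<^sub>R z + y \<in> interior K" using Q_add[OF Q_scale[OF z e0] y] .
  from recession_Q[OF z this] have "inner (g z) (e *\<^sub>R z + y) \<le> 0" .
  then have "?a \<le> e * \<nu>" using gx[OF z] by (simp add: inner_add_right)
  moreover have "e * \<nu> < ?a" using a nu_nonneg by (simp add: e_def field_simps)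
  ultimately show False by simp
qed

end

lemma crossing:
  fixes p :: "real \<Rightarrow> real"
  assumes ab: "a \<le> b" and cont: "continuous_on {a..b} p" and pa: "p a \<le> 0"
    and H: "\<And>t0. a \<le> t0 \<Longrightarrow> t0 < b \<Longrightarrow> p t0 = 0 \<Longrightarrow> (\<forall>t\<in>{t0<..b}. p t > 0) \<Longrightarrow> False"
  shows "p b \<le> 0"
proof (rule ccontr)
  assume pb: "\<not> p b \<le> 0"
  let ?S = "{t \<in> {a..b}. p t \<le> (\<lambda>_. 0) t}"
  have "closed ?S" by (rule continuous_on_closed_Collect_le[OF cont continuous_on_const closed_atLeastAtMost])
  moreover have "bounded ?S" by (rule bounded_subset[of "{a..b}"]) auto
  ultimately have "compact ?S" using compact_eq_bounded_closed by blast
  moreover have "a \<in> ?S" using ab pa by auto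
  ultimately obtain t0 where t0: "t0 \<in> ?S" and mx: "\<forall>t\<in>?S. t \<le> t0"
    using compact_attains_sup[of ?S] by blast
  have t0b: "t0 < b" using t0 pb by (cases "t0 = b") auto
  have pos: "\<forall>t\<in>{t0<..b}. p t > 0"
  proof
    fix t assume t: "t \<in> {t0<..b}"
    then have "t \<in> {a..b}" using t0 by auto
    moreover have "\<not> t \<le> t0" using t by auto
    ultimately show "p t > 0" using mx by force
  qed
  have "p t0 = 0"
  proof -
    have c2: "continuous_on {t0..b} p" using cont t0 by (auto intro: continuous_on_subset)
    have "p t0 \<le> 0" using t0 by auto
    from IVT'[of p t0 0 b, OF this _ _ c2] obtain x where x: "t0 \<le> x" "x \<le> b" "p x = 0"
      using pb t0b by force
    then have "x \<in> ?S" using t0 by auto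
    then have "x \<le> t0" using mx by auto
    with x show ?thesis by auto
  qed
  then show False using H[of t0] t0 t0b pos by auto
qed

lemma powr32: "(0::real) \<le> b \<Longrightarrow> b powr (3/2) = b * sqrt b"
proof (cases "b = 0")
  case False
  assume "0 \<le> b"
  then have "b > 0" using False by simp
  have "b powr (3/2) = b powr 1 * b powr (1/2)" using powr_add[of b 1 "1/2"] by simp
  then show ?thesis using \<open>b > 0\<close> by (simp add: powr_half_sqrt)
qed simp

context nbar begin

lemma ray: "x \<in> interior K \<Longrightarrow> y \<in> K \<Longrightarrow> 0 \<le> t \<Longrightarrow> x + t *\<^sub>R y \<in> interior K"
proof -
  assume x: "x \<in> interior K" and y: "y \<in> K" and t: "0 \<le> t"
  have "t *\<^sub>R y \<in> K" using coneK y t unfolding cone_def by auto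
  from Q_add[OF x this] show ?thesis .
qed

lemma key: assumes x: "x \<in> interior K" and y: "y \<in> K"
  shows "sqrt (inner (h x y) y) \<le> - inner (g x) y"
proof -
  define a where "a t = inner (g (x + t *\<^sub>R y)) y" for t
  define b where "b t = inner (h (x + t *\<^sub>R y) y) y" for t
  define bd where "bd t = inner (d3 (x + t *\<^sub>R y) y y) y" for t
  have inQ: "\<And>t. 0 \<le> t \<Longrightarrow> x + t *\<^sub>R y \<in> interior K" using ray x y by blast
  have da: "\<And>t. 0 \<le> t \<Longrightarrow> (a has_real_derivative b t) (at t)"
    unfolding a_def b_def using dg inQ by blast
  have db: "\<And>t. 0 \<le> t \<Longrightarrow> (b has_real_derivative bd t) (at t)"
    unfolding bd_def b_def using dh inQ by blast
  have b0: "\<And>t. 0 \<le> t \<Longrightarrow> 0 \<le> b t" unfolding b_def using psd inQ by blast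
  have bdb: "\<And>t. 0 \<le> t \<Longrightarrow> - (2 * (b t * sqrt (b t))) \<le> bd t"
  proof -
    fix t :: real assume "0 \<le> t"
    then have "\<bar>bd t\<bar> \<le> 2 * (b t) powr (3/2)" unfolding bd_def b_def using sc inQ by blast
    then show "- (2 * (b t * sqrt (b t))) \<le> bd t" using powr32[OF b0[OF \<open>0 \<le> t\<close>]] by linarith
  qed
  have aneg: "\<And>t. 0 \<le> t \<Longrightarrow> a t \<le> 0" unfolding a_def using recession inQ y by blast
  have bx: "b 0 = inner (h x y) y" and ax: "a 0 = inner (g x) y" by (simp_all add: a_def b_def)
  define r where "r = sqrt (b 0)"
  show ?thesis
  proof (cases "r = 0")
    case True
    then show ?thesis using aneg[of 0] bx ax r_def by simp
  next
    case False
    then have r0: "r > 0" using r_def b0[of 0] by simp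
    have r2: "r^2 = b 0" using r_def b0[of 0] by simp
    have L: "1 \<le> b T * (1/r + T)^2" if T: "0 \<le> T" for T
    proof -
      define p where "p t = 1 - b t * (1/r + t)^2" for t
      have "p T \<le> 0"
      proof (rule crossing[OF T])
        show "continuous_on {0..T} p" unfolding p_def
          by (intro continuous_intros continuous_at_imp_continuous_on ballI DERIV_isCont[OF db]) auto
        have "b 0 > 0" using r2 r0 by (metis zero_less_power)
        then show "p 0 \<le> 0" unfolding p_def using r2 r0 by (simp add: field_simps)
        fix t0 assume t0: "0 \<le> t0" "t0 < T" "p t0 = 0" and pos: "\<forall>t\<in>{t0<..T}. 0 < p t"
        define psi where "psi t = b t * (1/r + t)^2" for t
        define psi' where "psi' t = bd t * (1/r + t)^2 + b t * (2 * (1/r + t))" for t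
        have "\<exists>z. t0 < z \<and> z < T \<and> psi T - psi t0 = (T - t0) * psi' z"
        proof (rule MVT2[OF t0(2)])
          fix t assume "t0 \<le> t" "t \<le> T"
          then have "0 \<le> t" using t0 by simp
          show "(psi has_real_derivative psi' t) (at t)" unfolding psi_def psi'_def
            using r0 by (auto intro!: derivative_eq_intros db[OF \<open>0 \<le> t\<close>] simp: power2_eq_square field_simps)
        qed
        then obtain z where z: "t0 < z" "z < T" "psi T - psi t0 = (T - t0) * psi' z" by blast
        have z0: "0 \<le> z" using z t0 by simp
        have psiz: "psi z < 1" using pos z unfolding p_def psi_def by auto
        have c0: "1/r + z > 0" using r0 z0 by (simp add: add_pos_nonneg)
        have "sqrt (b z) * (1/r + z) = sqrt (psi z)" unfolding psi_def
          using c0 b0[OF z0] by (simp add: real_sqrt_mult)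
        also have "\<dots> \<le> 1" using psiz b0[OF z0] unfolding psi_def by simp
        finally have sq: "sqrt (b z) * (1/r + z) \<le> 1" .
        have "psi' z \<ge> - (2 * (b z * sqrt (b z))) * (1/r + z)^2 + b z * (2 * (1/r + z))"
          unfolding psi'_def using bdb[OF z0] by (intro add_right_mono mult_right_mono) auto
        also have "- (2 * (b z * sqrt (b z))) * (1/r + z)^2 + b z * (2 * (1/r + z))
              = 2 * b z * (1/r + z) * (1 - sqrt (b z) * (1/r + z))"
          by (simp add: power2_eq_square algebra_simps)
        also have "\<dots> \<ge> 0" using b0[OF z0] c0 sq by simp
        finally have "psi' z \<ge> 0" by simp
        then have "psi T \<ge> psi t0" using z by (smt (verit) mult_nonneg_nonneg)
        moreover have "psi t0 = 1" using t0 unfolding p_def psi_def by simp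
        moreover have "p T > 0" using pos t0 by auto
        ultimately show False unfolding p_def psi_def by simp
      qed
      then show ?thesis unfolding p_def by simp
    qed
    define e where "e t = a t + r / (1 + r * t)" for t
    have eT: "e 0 \<le> e T" if T: "0 \<le> T" for T
    proof (rule DERIV_nonneg_imp_nondecreasing[OF T])
      fix t assume t: "0 \<le> t" "t \<le> T"
      have pos: "1 + r * t > 0" using r0 t by (simp add: add_pos_nonneg)
      have d: "(e has_real_derivative b t - r^2 / (1 + r*t)^2) (at t)" unfolding e_def
        using pos by (auto intro!: derivative_eq_intros da[OF t(1)] simp: power2_eq_square field_simps)
      have "r^2 \<le> b t * (1 + r*t)^2"
        using L[OF t(1)] r0 t by (simp add: field_simps)
      then have "r^2 / (1 + r*t)^2 \<le> b t" using pos by (simp add: pos_divide_le_eq)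
      then show "\<exists>y. (e has_real_derivative y) (at t) \<and> 0 \<le> y" using d by auto
    qed
    show ?thesis
    proof (rule ccontr)
      assume "\<not> ?thesis"
      then have dl: "a 0 + r > 0" using bx ax r_def by simp
      define T where "T = 1 / (a 0 + r)"
      have T0: "T \<ge> 0" using dl by (simp add: T_def)
      have sq: "0 < r * r + (a 0 * a 0 + r * (a 0 * 2))" using mult_pos_pos[OF dl dl]
        by (simp add: algebra_simps)
      have "e 0 \<le> e T" using eT[OF T0] .
      then have "a 0 + r \<le> a T + r / (1 + r * T)" unfolding e_def by simp
      also have "\<dots> \<le> r / (1 + r * T)" using aneg[OF T0] by simp
      finally have "a 0 + r \<le> r / (1 + r * T)" .
      moreover have "r / (1 + r * T) < a 0 + r"
        using dl r0 sq unfolding T_def by (simp add: field_simps)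
      ultimately show False by simp
    qed
  qed
qed

end

context nbar begin

lemma hess_upper:
  assumes r: "r > 0" and q: "inner (h x u) u \<le> r^2" and T: "0 \<le> T" "r * T < 1"
    and seg: "\<And>t. 0 \<le> t \<Longrightarrow> t \<le> T \<Longrightarrow> x + t *\<^sub>R u \<in> interior K"
  shows "inner (h (x + T *\<^sub>R u) u) u \<le> 1 / (1/r - T)^2"
proof -
  define b where "b t = inner (h (x + t *\<^sub>R u) u) u" for t
  define bd where "bd t = inner (d3 (x + t *\<^sub>R u) u u) u" for t
  define rho where "rho t = 1 / (1/r - t)^2" for t
  have db: "\<And>t. 0 \<le> t \<Longrightarrow> t \<le> T \<Longrightarrow> (b has_real_derivative bd t) (at t)"
    unfolding bd_def b_def using dh seg by blast
  have b0: "\<And>t. 0 \<le> t \<Longrightarrow> t \<le> T \<Longrightarrow> 0 \<le> b t" unfolding b_def using psd seg by blast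
  have bdb: "\<And>t. 0 \<le> t \<Longrightarrow> t \<le> T \<Longrightarrow> bd t \<le> 2 * (b t * sqrt (b t))"
  proof -
    fix t :: real assume t: "0 \<le> t" "t \<le> T"
    then have "\<bar>bd t\<bar> \<le> 2 * (b t) powr (3/2)" unfolding bd_def b_def using sc seg by blast
    then show "bd t \<le> 2 * (b t * sqrt (b t))" using powr32[OF b0[OF t]] by linarith
  qed
  have cpos: "\<And>t. t \<le> T \<Longrightarrow> 1/r - t > 0"
  proof -
    fix t assume "t \<le> T"
    then have "r * t < 1" using T r by (smt (verit) mult_left_mono)
    then show "1/r - t > 0" using r by (simp add: field_simps)
  qed
  have rhoc: "continuous_on {0..T} rho" unfolding rho_def
  proof (intro continuous_intros ballI)
    fix t assume "t \<in> {0..T}"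
    then show "(1/r - t)^2 \<noteq> 0" using cpos[of t] by simp
  qed
  define p where "p t = b t - rho t" for t
  have "p T \<le> 0"
  proof (rule crossing[OF T(1)])
    show "continuous_on {0..T} p" unfolding p_def
      by (intro continuous_intros rhoc continuous_at_imp_continuous_on ballI DERIV_isCont[OF db]) auto
    show "p 0 \<le> 0" unfolding p_def b_def rho_def using q r by (simp add: field_simps)
    fix t0 assume t0: "0 \<le> t0" "t0 < T" "p t0 = 0" and pos: "\<forall>t\<in>{t0<..T}. 0 < p t"
    have bpos: "\<And>t. t0 \<le> t \<Longrightarrow> t \<le> T \<Longrightarrow> b t > 0"
    proof -
      fix t assume t: "t0 \<le> t" "t \<le> T"
      have "rho t > 0" unfolding rho_def using cpos[OF t(2)] by simp
      moreover have "p t \<ge> 0"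
      proof (cases "t = t0")
        case False
        then have "t \<in> {t0<..T}" using t by auto
        then show ?thesis using pos by fastforce
      qed (use t0 in simp)
      ultimately show "b t > 0" unfolding p_def by simp
    qed
    define eta where "eta t = 1 / sqrt (b t) + t" for t
    define eta' where "eta' t = 1 - bd t / (2 * b t * sqrt (b t))" for t
    have "\<exists>z. t0 < z \<and> z < T \<and> eta T - eta t0 = (T - t0) * eta' z"
    proof (rule MVT2[OF t0(2)])
      fix t assume t: "t0 \<le> t" "t \<le> T"
      have bt: "b t > 0" using bpos[OF t] .
      have d: "(b has_real_derivative bd t) (at t)" using db t t0 by simp
      show "(eta has_real_derivative eta' t) (at t)" unfolding eta_def eta'_def
        using bt by (auto intro!: derivative_eq_intros d simp: field_simps power2_eq_square)
    qed
    then obtain z where z: "t0 < z" "z < T" "eta T - eta t0 = (T - t0) * eta' z" by blast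
    have bz: "b z > 0" using bpos z by simp
    have "bd z / (2 * b z * sqrt (b z)) \<le> 1"
      using bdb[of z] z t0 bz by (simp add: field_simps)
    then have "eta' z \<ge> 0" unfolding eta'_def by simp
    then have "eta T \<ge> eta t0" using z by (smt (verit) mult_nonneg_nonneg)
    moreover have "eta t0 = 1/r" 
    proof -
      have "b t0 = rho t0" using t0 unfolding p_def by simp
      then have "sqrt (b t0) = 1 / (1/r - t0)" unfolding rho_def using cpos[of t0] t0
        by (simp add: real_sqrt_divide)
      then show ?thesis unfolding eta_def using cpos[of t0] t0 by simp
    qed
    ultimately have "1 / sqrt (b T) \<ge> 1/r - T" unfolding eta_def by simp
    then have "sqrt (b T) \<le> 1 / (1/r - T)" using cpos[of T] bpos[of T] t0
      by (simp add: field_simps)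
    then have "b T \<le> (1 / (1/r - T))^2" using bpos[of T] t0
      by (metis less_eq_real_def power_mono real_sqrt_ge_zero real_sqrt_pow2)
    then have "p T \<le> 0" unfolding p_def rho_def by (simp add: power_divide)
    moreover have "T \<in> {t0<..T}" using t0 by simp
    ultimately show False using pos by fastforce
  qed
  then show ?thesis unfolding p_def b_def rho_def by simp
qed

end

context nbar begin

lemma dikin: assumes x: "x \<in> interior K" and q1: "inner (h x u) u < 1"
  shows "x + u \<in> interior K"
proof (rule ccontr)
  assume nq: "x + u \<notin> interior K"
  have u0: "u \<noteq> 0" using nq x by auto
  define q where "q = inner (h x u) u"
  have q0: "0 \<le> q" unfolding q_def using psd[OF x] .
  define r where "r = (sqrt q + 1) / 2"
  have sq1: "sqrt q < 1" using q1 q0 unfolding q_def by simp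
  have "sqrt q \<ge> 0" using q0 by simp
  then have r0: "r > 0" unfolding r_def using add_nonneg_pos[OF \<open>0 \<le> sqrt q\<close> zero_less_one] by simp
  have r1: "r < 1" using sq1 unfolding r_def by (simp add: field_simps)
  have sqr: "sqrt q \<le> r" using sq1 unfolding r_def by simp
  have qr: "q \<le> r^2" using sqr q0 by (metis real_sqrt_le_iff real_sqrt_pow2 sqrt_le_D)
  let ?S = "{0..1} \<inter> (\<lambda>t. x + t *\<^sub>R u) -` (- interior K)"
  have "closed ?S"
    by (rule continuous_closed_preimage) (auto intro!: continuous_intros)
  then have "compact ?S" using compact_eq_bounded_closed bounded_Int bounded_closed_interval by blast
  moreover have "1 \<in> ?S" using nq by simp
  ultimately obtain ts where ts: "ts \<in> ?S" and mn: "\<forall>t\<in>?S. ts \<le> t"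
    using compact_attains_inf[of ?S] by blast
  have ts1: "0 \<le> ts" "ts \<le> 1" using ts by auto
  have zQ: "x + ts *\<^sub>R u \<notin> interior K" using ts by auto
  have tsp: "ts > 0" using zQ x ts1 by (cases "ts = 0") auto
  have inQ: "\<And>t. 0 \<le> t \<Longrightarrow> t < ts \<Longrightarrow> x + t *\<^sub>R u \<in> interior K"
  proof (rule ccontr)
    fix t assume t: "0 \<le> t" "t < ts" and "x + t *\<^sub>R u \<notin> interior K"
    then have "t \<in> ?S" using ts1 by auto
    then have "ts \<le> t" using mn by blast
    then show False using t by simp
  qed
  define M where "M = 1 / (1/r - 1)^2"
  have bM: "inner (h (x + t *\<^sub>R u) u) u \<le> M" if t: "0 \<le> t" "t < ts" for t
  proof -
    have "r * t \<le> 1 * t" using r1 t by (intro mult_right_mono) auto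
    then have "r * t < 1" using t ts1 by simp
    from hess_upper[OF r0 qr[unfolded q_def] t(1) this] inQ t
    have "inner (h (x + t *\<^sub>R u) u) u \<le> 1 / (1/r - t)^2" by auto
    also have "\<dots> \<le> M" unfolding M_def
    proof (rule divide_left_mono)
      have "1/r - 1 > 0" using r0 r1 by (simp add: field_simps)
      moreover have "1/r - 1 \<le> 1/r - t" using t ts1 by simp
      ultimately show "(1/r - 1)^2 \<le> (1/r - t)^2" by (simp add: power_mono)
      have "1/r - t > 0" using \<open>1/r - 1 > 0\<close> t ts1 by simp
      then show "0 < (1/r - t)^2 * (1/r - 1)^2"
        using \<open>1/r - 1 > 0\<close> by (intro mult_pos_pos zero_less_power)
    qed simp
    finally show ?thesis .
  qed
  have M0: "M \<ge> 0" unfolding M_def by simp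
  define a where "a t = inner (g (x + t *\<^sub>R u)) u" for t
  have aB: "a t \<le> a 0 + M * t" if t: "0 \<le> t" "t < ts" for t
  proof -
    have "(\<lambda>s. a 0 + M * s - a s) 0 \<le> (\<lambda>s. a 0 + M * s - a s) t"
    proof (rule DERIV_nonneg_imp_nondecreasing[of 0 t "\<lambda>s. a 0 + M * s - a s", OF t(1)])
      fix s assume s: "0 \<le> s" "s \<le> t"
      have m: "x + s *\<^sub>R u \<in> interior K" using inQ s t by simp
      have "((\<lambda>s. a 0 + M * s - a s) has_real_derivative M - inner (h (x + s *\<^sub>R u) u) u) (at s)"
        unfolding a_def by (auto intro!: derivative_eq_intros dg[OF m])
      moreover have "M - inner (h (x + s *\<^sub>R u) u) u \<ge> 0" using bM s t by simp
      ultimately show "\<exists>y. ((\<lambda>s. a 0 + M * s - a s) has_real_derivative y) (at s) \<and> 0 \<le> y" by blast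
    qed
    then show ?thesis by simp
  qed
  define C where "C = F x + \<bar>a 0\<bar> + M"
  have FB: "F (x + t *\<^sub>R u) \<le> C" if t: "0 \<le> t" "t < ts" for t
  proof -
    let ?k = "\<lambda>s. F x + (\<bar>a 0\<bar> + M) * s - F (x + s *\<^sub>R u)"
    have "?k 0 \<le> ?k t"
    proof (rule DERIV_nonneg_imp_nondecreasing[of 0 t ?k, OF t(1)])
      fix s assume s: "0 \<le> s" "s \<le> t"
      have m: "x + s *\<^sub>R u \<in> interior K" using inQ s t by simp
      have "(?k has_real_derivative (\<bar>a 0\<bar> + M) - a s) (at s)"
        unfolding a_def by (auto intro!: derivative_eq_intros dF[OF m])
      moreover have "a s \<le> a 0 + M * s" using aB s t by simp
      moreover have "M * s \<le> M" using M0 s t ts1 mult_left_mono[of s 1 M] by simp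
      ultimately show "\<exists>y. (?k has_real_derivative y) (at s) \<and> 0 \<le> y"
        by (intro exI conjI) (assumption, linarith)
    qed
    then have "F (x + t *\<^sub>R u) \<le> F x + (\<bar>a 0\<bar> + M) * t" by simp
    also have "\<dots> \<le> C"
    proof -
      have "(\<bar>a 0\<bar> + M) * t \<le> (\<bar>a 0\<bar> + M) * 1" using t ts1 M0 by (intro mult_left_mono) auto
      then show ?thesis unfolding C_def by simp
    qed
    finally show ?thesis .
  qed
  let ?z = "x + ts *\<^sub>R u"
  have near: "\<exists>t. 0 \<le> t \<and> t < ts \<and> x + t *\<^sub>R u \<noteq> ?z \<and> dist (x + t *\<^sub>R u) ?z < d" if d: "d > 0" for d
  proof -
    define s where "s = min (ts/2) (d / (2 * (norm u + 1)))"
    have "2 * (norm u + 1) > 0" by (simp add: add_nonneg_pos)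
    then have "d / (2 * (norm u + 1)) > 0" using d by simp
    then have s0: "s > 0" using tsp unfolding s_def by simp
    have s1: "s \<le> ts/2" unfolding s_def by (rule min.cobounded1)
    have "s * (norm u + 1) \<le> d / (2 * (norm u + 1)) * (norm u + 1)" unfolding s_def
      by (intro mult_right_mono) auto
    also have "\<dots> = d / 2"
    proof -
      have "norm u + 1 \<noteq> 0" by (metis add_nonneg_pos norm_ge_zero zero_less_one less_irrefl)
      then show ?thesis by (simp add: field_simps)
    qed
    finally have s2: "s * (norm u + 1) \<le> d / 2" .
    have dd: "dist (x + (ts - s) *\<^sub>R u) ?z = s * norm u"
      using s0 by (simp add: dist_norm algebra_simps)
    have "s * norm u < d" using s2 s0 d by (simp add: algebra_simps)
    moreover have "s * norm u > 0" using s0 u0 by simp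
    ultimately show ?thesis using dd s0 s1 tsp
      by (intro exI[of _ "ts - s"]) (auto simp: dist_commute)
  qed
  have zf: "?z \<in> frontier (interior K)"
  proof -
    have "?z \<in> closure (interior K)" unfolding closure_approachable
    proof (intro allI impI)
      fix e :: real assume "e > 0"
      from near[OF this] obtain t where "0 \<le> t" "t < ts" "dist (x + t *\<^sub>R u) ?z < e" by blast
      then show "\<exists>y\<in>interior K. dist y ?z < e" using inQ by blast
    qed
    then show ?thesis using zQ unfolding frontier_def by simp
  qed
  from blowup[OF zf] have "eventually (\<lambda>y. C + 1 \<le> F y) (at ?z within interior K)"
    unfolding filterlim_at_top by blast
  then obtain d where d: "d > 0" "\<forall>y\<in>interior K. y \<noteq> ?z \<and> dist y ?z < d \<longrightarrow> C + 1 \<le> F y"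
    unfolding eventually_at by blast
  from near[OF d(1)] obtain t where t: "0 \<le> t" "t < ts" "x + t *\<^sub>R u \<noteq> ?z" "dist (x + t *\<^sub>R u) ?z < d"
    by blast
  then have "C + 1 \<le> F (x + t *\<^sub>R u)" using d inQ by blast
  moreover have "F (x + t *\<^sub>R u) \<le> C" using FB t by simp
  ultimately show False by simp
qed

end

lemma quad_scale:
  fixes pa pb :: "'a::real_vector \<Rightarrow> real"
  assumes s1: "\<And>c u. pa (c *\<^sub>R u) = c^2 * pa u" and s2: "\<And>c u. pb (c *\<^sub>R u) = c^2 * pb u"
    and n1: "\<And>u. 0 \<le> pa u"
    and H: "\<And>u. pa u < 1 \<Longrightarrow> pb u \<le> C"
  shows "pb u \<le> C * pa u"
proof (cases "pa u = 0")
  case True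
  show ?thesis
  proof (rule ccontr)
    assume "\<not> ?thesis"
    then have pos: "pb u > 0" using True by simp
    define t where "t = sqrt ((\<bar>C\<bar> + 1) / pb u)"
    have "pa (t *\<^sub>R u) = 0" using s1 True by simp
    then have "pb (t *\<^sub>R u) \<le> C" using H by simp
    moreover have "pb (t *\<^sub>R u) = \<bar>C\<bar> + 1" using s2 pos unfolding t_def by simp
    ultimately show False by simp
  qed
next
  case False
  then have pos: "pa u > 0" using n1 le_less by metis
  have "pb u / pa u \<le> C"
  proof (rule field_le_mult_one_interval)
    fix z :: real assume z: "0 < z" "z < 1"
    define c where "c = sqrt (z / pa u)"
    have c2: "c^2 = z / pa u" using z pos unfolding c_def by simp
    have "pa (c *\<^sub>R u) = z" using s1 c2 pos by simp
    then have "pb (c *\<^sub>R u) \<le> C" using H z by simp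
    then have "z / pa u * pb u \<le> C" using s2 c2 by simp
    then show "z * (pb u / pa u) \<le> C" by simp
  qed
  then show ?thesis using pos by (simp add: pos_divide_le_eq)
qed

context nbar begin

lemma hq_scale: "x \<in> interior K \<Longrightarrow> inner (h x (c *\<^sub>R u)) (c *\<^sub>R u) = c^2 * inner (h x u) u"
  using hlin by (simp add: linear_scale power2_eq_square)

lemma dikin_dual: assumes x: "x \<in> interior K" and s: "s \<in> dual_cone K"
  shows "inner s u \<le> inner s x * sqrt (inner (h x u) u)"
proof -
  define q where "q = inner (h x u) u"
  have q0: "q \<ge> 0" unfolding q_def using psd x by simp
  have key: "t * inner s u \<le> inner s x" if "inner (h x (t *\<^sub>R u)) (t *\<^sub>R u) < 1" for t
  proof -
    have "inner (h x (- (t *\<^sub>R u))) (- (t *\<^sub>R u)) < 1"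
      using that hlin[OF x] by (simp add: linear_neg)
    from dikin[OF x this] have "x - t *\<^sub>R u \<in> K" using QK by auto
    then have "0 \<le> inner s (x - t *\<^sub>R u)" using s unfolding dual_cone_def by blast
    then show ?thesis by (simp add: inner_diff_right)
  qed
  show ?thesis
  proof (cases "q = 0")
    case True
    show ?thesis
    proof (rule ccontr)
      assume "\<not> ?thesis"
      then have pos: "inner s u > 0" using True q_def by simp
      define t where "t = (\<bar>inner s x\<bar> + 1) / inner s u"
      have "t * inner s u \<le> inner s x" by (rule key) (use True hq_scale[OF x] q_def in simp)
      moreover have "t * inner s u = \<bar>inner s x\<bar> + 1" using pos unfolding t_def by simp
      ultimately show False by simp
    qed
  next
    case False
    then have pos: "q > 0" using q0 by simp
    have "inner s u / sqrt q \<le> inner s x"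
    proof (rule field_le_mult_one_interval)
      fix z :: real assume z: "0 < z" "z < 1"
      define t where "t = z / sqrt q"
      have "inner (h x (t *\<^sub>R u)) (t *\<^sub>R u) = t^2 * q"
        using hq_scale[OF x, of t u] unfolding q_def by simp
      also have "\<dots> = z^2" using pos unfolding t_def by (simp add: power_divide)
      also have "\<dots> < 1" using z by (simp add: power_less_one_iff)
      finally have "t * inner s u \<le> inner s x" by (rule key)
      then have "z * inner s u \<le> inner s x * sqrt q" using pos unfolding t_def by (simp add: field_simps)
      then show "z * (inner s u / sqrt q) \<le> inner s x" using pos by (simp add: field_simps)
    qed
    then show ?thesis unfolding q_def[symmetric] using pos by (simp add: pos_divide_le_eq)
  qed
qed

lemma pd: assumes x: "x \<in> interior K" and q: "inner (h x u) u = 0" shows "u = 0"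
proof -
  have line: "x + t *\<^sub>R u \<in> K" for t
  proof -
    have "inner (h x (t *\<^sub>R u)) (t *\<^sub>R u) < 1" using hq_scale[OF x] q by simp
    from dikin[OF x this] show ?thesis using QK by auto
  qed
  have lim: "v \<in> K" if v: "v = u \<or> v = - u" for v
  proof -
    have inK: "inverse (real (Suc n)) *\<^sub>R x + v \<in> K" for n
    proof -
      have "x + real (Suc n) *\<^sub>R v \<in> K"
      proof (cases "v = u")
        case True then show ?thesis using line[of "real (Suc n)"] by simp
      next
        case False
        then have "v = -u" using v by simp
        then have "x + real (Suc n) *\<^sub>R v = x + (- real (Suc n)) *\<^sub>R u" by (simp add: algebra_simps)
        then show ?thesis using line[of "- real (Suc n)"] by simp
      qed
      then have "inverse (real (Suc n)) *\<^sub>R (x + real (Suc n) *\<^sub>R v) \<in> K"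
        using coneK unfolding cone_def by simp
      then show ?thesis by (simp add: scaleR_add_right)
    qed
    have "(\<lambda>n. inverse (real (Suc n)) *\<^sub>R x + v) \<longlonglongrightarrow> 0 *\<^sub>R x + v"
      by (intro tendsto_intros LIMSEQ_inverse_real_of_nat)
    then show ?thesis using closedK inK unfolding closed_sequential_limits by fastforce
  qed
  have "u \<in> K" using lim by simp
  moreover have "u \<in> uminus ` K" using lim[of "-u"] by (metis image_eqI minus_minus)
  ultimately show ?thesis using pointed by auto
qed

lemma h_inj: "x \<in> interior K \<Longrightarrow> inj (h x)"
proof -
  assume x: "x \<in> interior K"
  show ?thesis unfolding inj_def
  proof (intro allI impI)
    fix u v assume "h x u = h x v"
    then have "h x (u - v) = 0" using hlin[OF x] by (simp add: linear_diff)
    then have "u - v = 0" using pd[OF x, of "u - v"] by simp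
    then show "u = v" by simp
  qed
qed

lemma h_surj: "x \<in> interior K \<Longrightarrow> surj (h x)"
  using linear_inj_imp_surj[OF hlin h_inj] by blast

end

context nbar begin

lemma mixed:
  assumes r: "r > 0" and box: "\<And>a b. 0 \<le> a \<Longrightarrow> a \<le> r \<Longrightarrow> 0 \<le> b \<Longrightarrow> b \<le> r \<Longrightarrow> x + a *\<^sub>R u + b *\<^sub>R v \<in> interior K"
  shows "\<exists>a b. 0 \<le> a \<and> a \<le> r \<and> 0 \<le> b \<and> b \<le> r \<and>
     F (x + r *\<^sub>R u + r *\<^sub>R v) - F (x + r *\<^sub>R u) - F (x + r *\<^sub>R v) + F x
       = r * r * inner (h (x + a *\<^sub>R u + b *\<^sub>R v) v) u"
proof -
  define p where "p a = F (x + a *\<^sub>R u + r *\<^sub>R v) - F (x + a *\<^sub>R u)" for a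
  define p' where "p' a = inner (g (x + a *\<^sub>R u + r *\<^sub>R v)) u - inner (g (x + a *\<^sub>R u)) u" for a
  have "\<exists>z. 0 < z \<and> z < r \<and> p r - p 0 = (r - 0) * p' z"
  proof (rule MVT2[OF r])
    fix a assume a: "0 \<le> a" "a \<le> r"
    have m1: "x + r *\<^sub>R v + a *\<^sub>R u \<in> interior K" using box[OF a, of r] r by (simp add: algebra_simps)
    have m2: "x + a *\<^sub>R u \<in> interior K" using box[OF a, of 0] r by simp
    have d1: "((\<lambda>a. F (x + r *\<^sub>R v + a *\<^sub>R u)) has_real_derivative inner (g (x + r *\<^sub>R v + a *\<^sub>R u)) u) (at a)"
      using dF[OF m1] .
    have d2: "((\<lambda>a. F (x + a *\<^sub>R u)) has_real_derivative inner (g (x + a *\<^sub>R u)) u) (at a)"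
      using dF[OF m2] .
    have e: "\<And>a. x + r *\<^sub>R v + a *\<^sub>R u = x + a *\<^sub>R u + r *\<^sub>R v" by (simp add: algebra_simps)
    show "(p has_real_derivative p' a) (at a)" unfolding p_def p'_def
      using DERIV_diff[OF d1 d2] unfolding e .
  qed
  then obtain a where a: "0 < a" "a < r" "p r - p 0 = r * p' a" by auto
  define k where "k b = inner (g (x + a *\<^sub>R u + b *\<^sub>R v)) u" for b
  have "\<exists>z. 0 < z \<and> z < r \<and> k r - k 0 = (r - 0) * inner (h (x + a *\<^sub>R u + z *\<^sub>R v) v) u"
  proof (rule MVT2[OF r])
    fix b assume b: "0 \<le> b" "b \<le> r"
    have m: "x + a *\<^sub>R u + b *\<^sub>R v \<in> interior K" using box a b by simp
    show "(k has_real_derivative inner (h (x + a *\<^sub>R u + b *\<^sub>R v) v) u) (at b)"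
      unfolding k_def using dg[OF m] .
  qed
  then obtain b where b: "0 < b" "b < r" "k r - k 0 = r * inner (h (x + a *\<^sub>R u + b *\<^sub>R v) v) u" by auto
  have "p' a = k r - k 0" unfolding p'_def k_def by simp
  then have "p r - p 0 = r * r * inner (h (x + a *\<^sub>R u + b *\<^sub>R v) v) u" using a b by simp
  moreover have "p r - p 0 = F (x + r *\<^sub>R u + r *\<^sub>R v) - F (x + r *\<^sub>R u) - F (x + r *\<^sub>R v) + F x"
    unfolding p_def by simp
  ultimately show ?thesis using a b by (intro exI[of _ a] exI[of _ b]) auto
qed

lemma h_sym: assumes x: "x \<in> interior K" shows "inner (h x v) u = inner (h x u) v"
proof (rule ccontr)
  assume ne: "inner (h x v) u \<noteq> inner (h x u) v"
  define \<epsilon> where "\<epsilon> = \<bar>inner (h x v) u - inner (h x u) v\<bar> / 2"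
  have e0: "\<epsilon> > 0" using ne unfolding \<epsilon>_def by simp
  have c1: "isCont (\<lambda>y. inner (h y v) u) x"
    using has_derivative_continuous[OF has_derivative_inner_left[OF hder[OF x]]] .
  have c2: "isCont (\<lambda>y. inner (h y u) v) x"
    using has_derivative_continuous[OF has_derivative_inner_left[OF hder[OF x]]] .
  obtain d1 where d1: "d1 > 0" "\<forall>y. dist y x < d1 \<longrightarrow> dist (inner (h y v) u) (inner (h x v) u) < \<epsilon>"
    using c1 e0 unfolding continuous_at_eps_delta by blast
  obtain d2 where d2: "d2 > 0" "\<forall>y. dist y x < d2 \<longrightarrow> dist (inner (h y u) v) (inner (h x u) v) < \<epsilon>"
    using c2 e0 unfolding continuous_at_eps_delta by blast
  obtain e where e: "e > 0" "ball x e \<subseteq> interior K" using x openQ open_contains_ball by blast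
  define N where "N = norm u + norm v + 1"
  have N0: "N > 0" unfolding N_def by (simp add: add_nonneg_pos)
  define r where "r = min e (min d1 d2) / (2 * N)"
  have r0: "r > 0" unfolding r_def using e d1 d2 N0 by simp
  have m0: "min e (min d1 d2) > 0" using e d1 d2 by simp
  have "r * N = min e (min d1 d2) / 2" unfolding r_def using N0 by simp
  then have rN: "r * N < min e (min d1 d2)" using m0 by linarith
  have close: "dist (x + a *\<^sub>R w1 + b *\<^sub>R w2) x < min e (min d1 d2)"
    if ab: "0 \<le> a" "a \<le> r" "0 \<le> b" "b \<le> r" and w: "w1 = u \<and> w2 = v \<or> w1 = v \<and> w2 = u" for a b w1 w2
  proof -
    have "dist (x + a *\<^sub>R w1 + b *\<^sub>R w2) x = norm (a *\<^sub>R w1 + b *\<^sub>R w2)" by (simp add: dist_norm)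
    also have "\<dots> \<le> a * norm w1 + b * norm w2" using ab by (metis norm_triangle_ineq norm_scaleR abs_of_nonneg)
    also have "\<dots> \<le> r * norm w1 + r * norm w2" using ab by (intro add_mono mult_right_mono) auto
    also have "\<dots> \<le> r * N" using w r0 unfolding N_def by (auto simp: algebra_simps)
    finally show ?thesis using rN by simp
  qed
  have box: "x + a *\<^sub>R w1 + b *\<^sub>R w2 \<in> interior K"
    if ab: "0 \<le> a" "a \<le> r" "0 \<le> b" "b \<le> r" and w: "w1 = u \<and> w2 = v \<or> w1 = v \<and> w2 = u" for a b w1 w2
    using close[OF ab w] e by (auto simp: dist_commute)
  obtain a1 b1 where ab1: "0 \<le> a1" "a1 \<le> r" "0 \<le> b1" "b1 \<le> r" and
    D1: "F (x + r *\<^sub>R u + r *\<^sub>R v) - F (x + r *\<^sub>R u) - F (x + r *\<^sub>R v) + F x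
       = r * r * inner (h (x + a1 *\<^sub>R u + b1 *\<^sub>R v) v) u"
    using mixed[OF r0, of x u v] box by blast
  obtain a2 b2 where ab2: "0 \<le> a2" "a2 \<le> r" "0 \<le> b2" "b2 \<le> r" and
    D2: "F (x + r *\<^sub>R v + r *\<^sub>R u) - F (x + r *\<^sub>R v) - F (x + r *\<^sub>R u) + F x
       = r * r * inner (h (x + a2 *\<^sub>R v + b2 *\<^sub>R u) u) v"
    using mixed[OF r0, of x v u] box by blast
  have eqp: "x + r *\<^sub>R v + r *\<^sub>R u = x + r *\<^sub>R u + r *\<^sub>R v" by (simp add: algebra_simps)
  note D2' = D2[unfolded eqp]
  have "r * r * inner (h (x + a1 *\<^sub>R u + b1 *\<^sub>R v) v) u = r * r * inner (h (x + a2 *\<^sub>R v + b2 *\<^sub>R u) u) v"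
    using D1 D2' by linarith
  then have eq: "inner (h (x + a1 *\<^sub>R u + b1 *\<^sub>R v) v) u = inner (h (x + a2 *\<^sub>R v + b2 *\<^sub>R u) u) v"
    using r0 by simp
  have "dist (inner (h (x + a1 *\<^sub>R u + b1 *\<^sub>R v) v) u) (inner (h x v) u) < \<epsilon>"
    using d1 close[OF ab1, of u v] by simp
  moreover have "dist (inner (h (x + a2 *\<^sub>R v + b2 *\<^sub>R u) u) v) (inner (h x u) v) < \<epsilon>"
    using d2 close[OF ab2, of v u] by simp
  ultimately have "\<bar>inner (h x v) u - inner (h x u) v\<bar> < 2 * \<epsilon>" using eq unfolding dist_real_def by linarith
  then show False unfolding \<epsilon>_def by simp
qed

end

lemma int_cone_scale:
  fixes S :: "'a::real_normed_vector set"
  assumes cS: "cone S" and x: "x \<in> interior S" and c: "c > 0"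
  shows "c *\<^sub>R x \<in> interior S"
proof -
  obtain e where e: "e > 0" "ball x e \<subseteq> S" using x by (meson mem_interior)
  have "ball (c *\<^sub>R x) (c * e) \<subseteq> S"
  proof
    fix y assume y: "y \<in> ball (c *\<^sub>R x) (c * e)"
    have "dist x ((1/c) *\<^sub>R y) = dist (c *\<^sub>R x) y / c"
    proof -
      have "x - (1/c) *\<^sub>R y = (1/c) *\<^sub>R (c *\<^sub>R x - y)" using c by (simp add: algebra_simps)
      then show ?thesis using c by (simp add: dist_norm)
    qed
    also have "\<dots> < e" using y c by (simp add: field_simps mult.commute)
    finally have "(1/c) *\<^sub>R y \<in> S" using e by auto
    then have "c *\<^sub>R ((1/c) *\<^sub>R y) \<in> S" using cS c unfolding cone_def by (metis less_eq_real_def)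
    then show "y \<in> S" using c by simp
  qed
  then show ?thesis using c e by (meson mem_interior mult_pos_pos)
qed

lemma cone_dual: "cone (dual_cone K)"
  unfolding cone_def dual_cone_def by auto

lemma sphere_ne: "sphere (0::'a::euclidean_space) 1 \<noteq> {}"
proof -
  obtain b :: 'a where "b \<in> Basis" using nonempty_Basis by blast
  then have "norm b = 1" by simp
  then show ?thesis by auto
qed

context nbar begin

lemma neg_g_int: assumes z: "z \<in> interior K" shows "- g z \<in> interior (dual_cone K)"
proof -
  let ?q = "\<lambda>u. inner (h z u) u"
  have bl: "bounded_linear (h z)" using hlin[OF z] linear_conv_bounded_linear by blast
  have cq: "continuous_on (sphere 0 1) ?q"
    by (intro continuous_intros linear_continuous_on bl)
  obtain u0 where u0: "u0 \<in> sphere 0 1" and mn: "\<forall>y\<in>sphere 0 1. ?q u0 \<le> ?q y"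
    using continuous_attains_inf[OF compact_sphere sphere_ne cq] by blast
  define m where "m = ?q u0"
  have "u0 \<noteq> 0" using u0 by auto
  then have m0: "m > 0" using pd[OF z, of u0] psd[OF z, of u0] unfolding m_def by fastforce
  define c where "c = sqrt m"
  have c0: "c > 0" using m0 unfolding c_def by simp
  have low: "c * norm y \<le> - inner (g z) y" if y: "y \<in> K" for y
  proof (cases "y = 0")
    case True then show ?thesis by simp
  next
    case False
    define w where "w = (1 / norm y) *\<^sub>R y"
    have "w \<in> sphere 0 1" using False unfolding w_def by simp
    then have "m \<le> ?q w" using mn unfolding m_def by blast
    moreover have "?q y = (norm y)^2 * ?q w"
      using hq_scale[OF z, of "norm y" w] False unfolding w_def by simp
    ultimately have "(norm y)^2 * m \<le> ?q y" by (simp add: mult_left_mono)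
    then have "sqrt ((norm y)^2 * m) \<le> sqrt (?q y)" by (rule real_sqrt_le_mono)
    then have "norm y * c \<le> sqrt (?q y)" unfolding c_def by (simp add: real_sqrt_mult)
    then show ?thesis using key[OF z y] by (simp add: mult.commute)
  qed
  have "ball (- g z) c \<subseteq> dual_cone K"
  proof
    fix w assume w: "w \<in> ball (- g z) c"
    show "w \<in> dual_cone K" unfolding dual_cone_def
    proof (intro CollectI ballI)
      fix y assume y: "y \<in> K"
      have "\<bar>inner (w + g z) y\<bar> \<le> norm (w + g z) * norm y" by (rule Cauchy_Schwarz_ineq2)
      moreover have "norm (w + g z) \<le> c" using w by (simp add: dist_norm norm_minus_commute add.commute)
      then have "norm (w + g z) * norm y \<le> c * norm y" by (simp add: mult_right_mono)
      moreover have "inner w y = - inner (g z) y + inner (w + g z) y" by (simp add: inner_add_left)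
      ultimately show "0 \<le> inner w y" using low[OF y] by linarith
    qed
  qed
  then show ?thesis using c0 by (meson mem_interior)
qed

lemma gFs_eq:
  assumes dual_def: "\<forall>s\<in>interior (dual_cone K). Fs s = (SUP x\<in>interior K. - inner s x - F x)"
    and dual_grad: "\<forall>s\<in>interior (dual_cone K). (Fs has_derivative (\<lambda>u. inner (gFs s) u)) (at s)"
    and z: "z \<in> interior K"
  shows "gFs (- g z) = - z"
proof -
  define s where "s = - g z"
  have sI: "s \<in> interior (dual_cone K)" using neg_g_int[OF z] unfolding s_def .
  have att: "- inner s x - F x \<le> - inner s z - F z" if x: "x \<in> interior K" for x
    using conv_seg[OF z x] unfolding s_def by (simp add: inner_diff_right)
  have Fss: "Fs s = - inner s z - F z"
    using dual_def sI z att by (auto intro!: cSup_eq_maximum)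
  have s2: "(1/2) *\<^sub>R s \<in> interior (dual_cone K)" using int_cone_scale[OF cone_dual sI] by simp
  obtain d1 where d1: "d1 > 0" "ball ((1/2) *\<^sub>R s) d1 \<subseteq> dual_cone K" using s2 by (meson mem_interior)
  obtain d2 where d2: "d2 > 0" "ball s d2 \<subseteq> interior (dual_cone K)"
    using sI open_interior open_contains_ball by blast
  define d where "d = min d1 d2"
  have d0: "d > 0" using d1 d2 unfolding d_def by simp
  have z2: "2 *\<^sub>R z \<in> interior K" using Q_scale[OF z] by simp
  have g2: "g (2 *\<^sub>R z) = - (1/2) *\<^sub>R s" using g_hom'[OF z, of 2] unfolding s_def by simp
  have lowF: "- inner s z - F z \<le> Fs t + inner (t - s) z" if t: "t \<in> ball s d" for t
  proof -
    have tI: "t \<in> interior (dual_cone K)" using t d2 unfolding d_def by auto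
    have tD: "t - (1/2) *\<^sub>R s \<in> dual_cone K"
    proof -
      have "(1/2) *\<^sub>R s - (t - (1/2) *\<^sub>R s) = s - t" by (simp add: algebra_simps scaleR_2[symmetric])
      then have "dist ((1/2) *\<^sub>R s) (t - (1/2) *\<^sub>R s) = dist s t"
        by (simp only: dist_norm)
      then show ?thesis using t d1 unfolding d_def by auto
    qed
    have bd: "- inner t x - F x \<le> - F (2 *\<^sub>R z) - inner s z" if x: "x \<in> interior K" for x
    proof -
      have "F (2 *\<^sub>R z) + inner (g (2 *\<^sub>R z)) (x - 2 *\<^sub>R z) \<le> F x" using conv_seg[OF z2 x] .
      moreover have "0 \<le> inner (t - (1/2) *\<^sub>R s) x" using tD QK x unfolding dual_cone_def by blast
      ultimately show ?thesis unfolding g2 by (simp add: inner_diff_right inner_diff_left algebra_simps)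
    qed
    have "bdd_above ((\<lambda>x. - inner t x - F x) ` interior K)"
      using bd by (intro bdd_aboveI2) blast
    then have "- inner t z - F z \<le> Fs t" using dual_def tI z by (auto intro: cSUP_upper)
    then show ?thesis by (simp add: inner_diff_left)
  qed
  define e where "e t = Fs t - Fs s + inner (t - s) z" for t
  have de: "(e has_derivative (\<lambda>w. inner (gFs s) w + inner w z)) (at s)"
    unfolding e_def using dual_grad sI by (auto intro!: derivative_eq_intros)
  have "(\<lambda>w. inner (gFs s) w + inner w z) = (\<lambda>w. 0)"
  proof (rule differential_zero_maxmin[OF _ open_ball de])
    show "s \<in> ball s d" using d0 by simp
    show "(\<forall>y\<in>ball s d. e y \<le> e s) \<or> (\<forall>y\<in>ball s d. e s \<le> e y)"
    proof (rule disjI2, intro ballI)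
      fix y assume "y \<in> ball s d"
      from lowF[OF this] Fss show "e s \<le> e y" unfolding e_def by simp
    qed
  qed
  then have "inner (gFs s) (gFs s + z) + inner (gFs s + z) z = 0" by metis
  then have "inner (gFs s + z) (gFs s + z) = 0" by (simp add: inner_add_left inner_add_right inner_commute)
  then show ?thesis unfolding s_def[symmetric] by (simp add: eq_neg_iff_add_eq_0)
qed

lemma hFs_eq:
  assumes dual_def: "\<forall>s\<in>interior (dual_cone K). Fs s = (SUP x\<in>interior K. - inner s x - F x)"
    and dual_grad: "\<forall>s\<in>interior (dual_cone K). (Fs has_derivative (\<lambda>u. inner (gFs s) u)) (at s)"
    and dual_hess: "\<forall>s\<in>interior (dual_cone K). (gFs has_derivative hFs s) (at s)"
    and z: "z \<in> interior K"
  shows "hFs (- g z) (h z v) = v"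
proof -
  have dsig: "((\<lambda>y. - g y) has_derivative (\<lambda>v. - h z v)) (at z)"
    using gder[OF z] by (auto intro!: derivative_eq_intros)
  have dg2: "(gFs has_derivative hFs (- g z)) (at (- g z))" using dual_hess neg_g_int[OF z] by blast
  from has_derivative_compose[OF dsig dg2]
  have d1: "((\<lambda>y. gFs (- g y)) has_derivative (\<lambda>v. hFs (- g z) (- h z v))) (at z)" .
  have d2: "((\<lambda>y. gFs (- g y)) has_derivative (\<lambda>v. - v)) (at z)"
  proof (rule has_derivative_transform_within_open[OF _ openQ z])
    show "((\<lambda>y. - y) has_derivative (\<lambda>v. - v)) (at z)" by (auto intro!: derivative_eq_intros)
    fix y assume "y \<in> interior K"
    then show "- y = gFs (- g y)" using gFs_eq[OF dual_def dual_grad] by simp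
  qed
  from has_derivative_unique[OF d1 d2] have "hFs (- g z) (- h z v) = - v" by metis
  moreover have "linear (hFs (- g z))" using dg2 has_derivative_linear by blast
  ultimately show ?thesis by (simp add: linear_neg)
qed

end

lemma inversion:
  fixes P Q :: "'a::real_inner \<Rightarrow> 'a"
  assumes lP: "linear P" and lQ: "linear Q" and sym: "\<And>a b. inner (P a) b = inner (P b) a"
    and psdP: "\<And>a. 0 \<le> inner (P a) a" and c: "c > 0"
    and le: "\<And>a. inner (P a) a \<le> c * inner (Q a) a"
    and v: "P v = w" and u: "Q u = w"
  shows "inner w u \<le> c * inner w v"
proof -
  define u' where "u' = (1/c) *\<^sub>R u"
  have "0 \<le> inner (P (u' - v)) (u' - v)" by (rule psdP)
  also have "\<dots> = inner (P u') u' - 2 * inner (P v) u' + inner (P v) v"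
    using lP sym[of u' v] by (simp add: linear_diff inner_diff_left inner_diff_right inner_commute)
  finally have 1: "0 \<le> inner (P u') u' - 2 * inner (P v) u' + inner (P v) v" .
  have "inner (P u') u' \<le> c * inner (Q u') u'" by (rule le)
  also have "\<dots> = inner w u / c" unfolding u'_def using lQ u c
    by (simp add: linear_scale power2_eq_square inner_commute)
  finally have 2: "inner (P u') u' \<le> inner w u / c" .
  have 3: "inner (P v) u' = inner w u / c" unfolding u'_def using v by simp
  have 4: "inner (P v) v = inner w v" using v by simp
  have "0 \<le> inner w u / c - 2 * (inner w u / c) + inner w v" using 1 2 3 4 by linarith
  then have "inner w u / c \<le> inner w v" by simp
  then show ?thesis using c by (simp add: pos_divide_le_eq mult.commute)
qed

context nbar begin

lemma nu_pos: "\<nu> > 0"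
proof (rule ccontr)
  assume "\<not> \<nu> > 0"
  then have n0: "\<nu> = 0" using nu_nonneg by simp
  obtain x where x: "x \<in> interior K" using Qne by auto
  have "x = 0" using pd[OF x] qx[OF x] n0 by simp
  then obtain e where e: "e > 0" "ball 0 e \<subseteq> K" using x by (meson mem_interior)
  obtain b :: 'e where b: "b \<in> Basis" using nonempty_Basis by blast
  define y where "y = (e/2) *\<^sub>R b"
  have ny: "norm y = e / 2" using b e unfolding y_def by simp
  have "y \<in> K" "- y \<in> K" using e ny by (auto simp: subset_iff)
  then have "y \<in> K \<inter> uminus ` K" by (metis IntI image_eqI minus_minus)
  then have "y = 0" using pointed by auto
  then show False using ny e by simp
qed

lemma path_ineq:
  assumes x0: "x0 \<in> interior K" and x1: "x1 \<in> interior K" and m: "0 < m1" "m1 \<le> m0"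
    and s0: "s0 = - m0 *\<^sub>R g x0" and s1: "s1 = - m1 *\<^sub>R g x1"
    and orth: "inner (s0 - s1) (x0 - x1) = 0" and same: "m1 = m0 \<Longrightarrow> x1 = x0 \<and> s1 = s0"
  shows "inner s0 x1 \<le> \<nu> * m0 \<and> inner s1 x0 \<le> \<nu> * m0"
proof (cases "m1 = m0")
  case True
  then have "x1 = x0" "s1 = s0" using same by auto
  moreover have ss0: "inner s0 x0 = \<nu> * m0" using gx[OF x0] s0 by simp
  ultimately show ?thesis by simp
next
  case False
  then have m': "m1 < m0" using m by simp
  have m0p: "m0 > 0" using m by simp
  have ss0: "inner s0 x0 = \<nu> * m0" using gx[OF x0] s0 by simp
  have ss1: "inner s1 x1 = \<nu> * m1" using gx[OF x1] s1 by simp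
  have o2: "inner s0 (x0 - x1) = inner s1 (x0 - x1)" using orth by (simp add: inner_diff_left)
  have o3: "inner (s0 - s1) x0 = inner (s0 - s1) x1" using orth by (simp add: inner_diff_right)
  have inv: "1 / m0 < 1 / m1" using m' m by (simp add: frac_less2)
  have mo: "inner (g x1) (x0 - x1) \<le> inner (g x0) (x0 - x1)" using mono_seg[OF x1 x0] .
  have gx0: "g x0 = - (1/m0) *\<^sub>R s0" using s0 m0p by simp
  have gx1: "g x1 = - (1/m1) *\<^sub>R s1" using s1 m by simp
  define E where "E = inner s0 (x0 - x1)"
  have "- (1/m1) * E \<le> - (1/m0) * E" using mo o2 unfolding gx0 gx1 E_def by simp
  then have "E * (1/m0 - 1/m1) \<le> 0" by (simp add: algebra_simps)
  then have E0: "E \<ge> 0" using inv by (simp add: mult_le_0_iff)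
  have y0: "(1/m0) *\<^sub>R x0 \<in> interior K" using Q_scale[OF x0] m0p by simp
  have y1: "(1/m1) *\<^sub>R x1 \<in> interior K" using Q_scale[OF x1] m by simp
  have gy0: "g ((1/m0) *\<^sub>R x0) = - s0" using g_hom'[OF x0, of "1/m0"] s0 m0p by simp
  have gy1: "g ((1/m1) *\<^sub>R x1) = - s1" using g_hom'[OF x1, of "1/m1"] s1 m by simp
  have mo2: "inner (g ((1/m1) *\<^sub>R x1)) ((1/m0) *\<^sub>R x0 - (1/m1) *\<^sub>R x1)
       \<le> inner (g ((1/m0) *\<^sub>R x0)) ((1/m0) *\<^sub>R x0 - (1/m1) *\<^sub>R x1)" using mono_seg[OF y1 y0] .
  define E' where "E' = inner (s0 - s1) x0"
  have "inner (s0 - s1) ((1/m0) *\<^sub>R x0 - (1/m1) *\<^sub>R x1) \<le> 0"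
    using mo2 unfolding gy0 gy1 by (simp add: inner_diff_left)
  moreover have "inner (s0 - s1) ((1/m0) *\<^sub>R x0 - (1/m1) *\<^sub>R x1) = E' / m0 - E' / m1"
    unfolding E'_def inner_diff_right inner_scaleR_right o3[symmetric] by simp
  ultimately have "E' / m0 - E' / m1 \<le> 0" by simp
  then have "E' * (1/m0 - 1/m1) \<le> 0" by (simp add: right_diff_distrib)
  then have E'0: "E' \<ge> 0" using inv by (simp add: mult_le_0_iff)
  show ?thesis
  proof
    show "inner s0 x1 \<le> \<nu> * m0" using E0 ss0 unfolding E_def by (simp add: inner_diff_right)
    show "inner s1 x0 \<le> \<nu> * m0" using E'0 ss0 unfolding E'_def by (simp add: inner_diff_left)
  qed
qed

lemma two_sided:
  assumes p: "p \<in> interior K" and c: "c \<in> interior K" and cp: "c + u \<in> interior K" and cm: "c - u \<in> interior K"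
  shows "inner (h p u) u \<le> 2 * (inner (- g p) c)^2"
proof -
  let ?q = "\<lambda>y. inner (h p y) y"
  define al where "al = inner (- g p) (c + u)"
  define be where "be = inner (- g p) (c - u)"
  have a: "sqrt (?q (c + u)) \<le> al" using key[OF p] cp QK unfolding al_def by auto
  have b: "sqrt (?q (c - u)) \<le> be" using key[OF p] cm QK unfolding be_def by auto
  have a0: "0 \<le> al" using a psd[OF p] by (meson order.trans real_sqrt_ge_zero)
  have b0: "0 \<le> be" using b psd[OF p] by (meson order.trans real_sqrt_ge_zero)
  have qa: "?q (c + u) \<le> al^2" using a psd[OF p, of "c+u"] a0
    by (metis power_mono real_sqrt_ge_zero real_sqrt_pow2)
  have qb: "?q (c - u) \<le> be^2" using b psd[OF p, of "c-u"] b0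
    by (metis power_mono real_sqrt_ge_zero real_sqrt_pow2)
  have para: "?q (c + u) + ?q (c - u) = 2 * ?q c + 2 * ?q u"
    using hlin[OF p] by (simp add: linear_add linear_diff inner_add_left inner_add_right
        inner_diff_left inner_diff_right)
  have "al + be = 2 * inner (- g p) c" unfolding al_def be_def by (simp add: inner_add_right inner_diff_right)
  then have "(al + be)^2 = (2 * inner (- g p) c)^2" by simp
  moreover have "al^2 + be^2 \<le> (al + be)^2" using a0 b0 by (simp add: power2_eq_square algebra_simps)
  ultimately have "2 * ?q c + 2 * ?q u \<le> (2 * inner (- g p) c)^2" using para qa qb by linarith
  moreover have "?q c \<ge> 0" using psd[OF p] .
  ultimately show ?thesis by (simp add: power2_eq_square algebra_simps)
qed

end

lemma sqrt_bound:
  fixes a q C :: real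
  assumes a: "0 \<le> a" and q: "0 \<le> q" and C: "0 \<le> C" and h: "a^2 * q \<le> C * a * sqrt q"
  shows "sqrt (a^2 * q) \<le> C"
proof -
  define t where "t = a * sqrt q"
  have t0: "t \<ge> 0" using a q unfolding t_def by simp
  have st: "sqrt (a^2 * q) = t" using a q unfolding t_def by (simp add: real_sqrt_mult)
  have "t * t \<le> C * t" using h a q unfolding t_def by (simp add: power2_eq_square algebra_simps)
  then have "t \<le> C" using t0 C by (cases "t = 0") (auto simp: mult_le_cancel_right)
  then show ?thesis using st by simp
qed

theorem mainTheorem3:
  fixes K :: "'e::euclidean_space set"
    and F :: "'e \<Rightarrow> real" and gF :: "'e \<Rightarrow> 'e" and hF :: "'e \<Rightarrow> 'e \<Rightarrow> 'e"
    and d3F :: "'e \<Rightarrow> 'e \<Rightarrow> 'e \<Rightarrow> 'e"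
    and Fs :: "'e \<Rightarrow> real" and gFs :: "'e \<Rightarrow> 'e" and hFs :: "'e \<Rightarrow> 'e \<Rightarrow> 'e"
    and \<nu> :: real
    and A :: "'e \<Rightarrow> 'h::euclidean_space" and b :: 'h and c :: 'e
    and xp sp :: "real \<Rightarrow> 'e" and yp :: "real \<Rightarrow> 'h"
  assumes cone: "regular_cone K"
    and barrier: "normal_barrier K F gF hF d3F \<nu>"
    and dual_def: "\<forall>s\<in>interior (dual_cone K).
                     Fs s = (SUP x\<in>interior K. - inner s x - F x)"
    and dual_grad: "\<forall>s\<in>interior (dual_cone K). (Fs has_derivative (\<lambda>u. inner (gFs s) u)) (at s)"
    and dual_hess: "\<forall>s\<in>interior (dual_cone K). (gFs has_derivative hFs s) (at s)"
    and linA: "linear A"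
    and primal_strict: "\<exists>x\<in>interior K. A x = b"
    and dual_strict: "\<exists>y s. s \<in> interior (dual_cone K) \<and> s + adjoint A y = c"
    and path: "\<forall>\<mu>>0. xp \<mu> \<in> interior K \<and> A (xp \<mu>) = b \<and> sp \<mu> + adjoint A (yp \<mu>) = c
                      \<and> sp \<mu> = - \<mu> *\<^sub>R gF (xp \<mu>)"
  shows "(\<forall>\<mu>0 \<mu>1. 0 < \<mu>1 \<and> \<mu>1 \<le> \<mu>0 \<longrightarrow>
            local_norm hF (xp \<mu>0) (xp \<mu>1) \<le> \<nu> \<and> local_norm hFs (sp \<mu>0) (sp \<mu>1) \<le> \<nu>)
      \<and> (\<forall>xs. limit_point_at0 xp xs \<longrightarrow> op_norm_B (hF (xp 1)) xs \<le> \<nu>)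
      \<and> (\<forall>ss. limit_point_at0 sp ss \<longrightarrow> op_norm_B (inv (hF (xp 1))) ss \<le> \<nu>)
      \<and> (\<forall>\<mu>. 0 < \<mu> \<and> \<mu> \<le> 1 \<longrightarrow>
            loewner_le (\<lambda>u. (1 / (4 * \<nu>\<^sup>2)) *\<^sub>R hF (xp 1) u) (hF (xp \<mu>))
          \<and> loewner_le (hF (xp \<mu>)) (\<lambda>u. (4 * \<nu>\<^sup>2 / \<mu>\<^sup>2) *\<^sub>R hF (xp 1) u)
          \<and> loewner_le (\<lambda>u. (1 / (4 * \<nu>\<^sup>2)) *\<^sub>R inv (hF (xp 1)) u) (hFs (sp \<mu>))
          \<and> loewner_le (hFs (sp \<mu>)) (\<lambda>u. (4 * \<nu>\<^sup>2 / \<mu>\<^sup>2) *\<^sub>R inv (hF (xp 1)) u))"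
proof -
  interpret N: nbar K F gF hF d3F \<nu> by (rule nbar.intro[OF cone barrier])
  have xQ: "\<And>\<mu>. \<mu> > 0 \<Longrightarrow> xp \<mu> \<in> interior K" using path by blast
  have xA: "\<And>\<mu>. \<mu> > 0 \<Longrightarrow> A (xp \<mu>) = b" using path by blast
  have sA: "\<And>\<mu>. \<mu> > 0 \<Longrightarrow> sp \<mu> + adjoint A (yp \<mu>) = c" using path by blast
  have sg: "\<And>\<mu>. \<mu> > 0 \<Longrightarrow> sp \<mu> = - \<mu> *\<^sub>R gF (xp \<mu>)" using path by blast
  have nu0: "\<nu> > 0" by (rule N.nu_pos)
  have orth: "inner (sp a - sp d) (xp a - xp d) = 0" if "a > 0" "d > 0" for a d
  proof -
    have "sp a - sp d = adjoint A (yp d) - adjoint A (yp a)" using sA[OF that(1)] sA[OF that(2)]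
      by (simp add: algebra_simps)
    also have "\<dots> = adjoint A (yp d - yp a)" using adjoint_linear[OF linA] by (simp add: linear_diff)
    finally have e: "sp a - sp d = adjoint A (yp d - yp a)" .
    have "inner (adjoint A (yp d - yp a)) (xp a - xp d) = inner (yp d - yp a) (A (xp a - xp d))"
      using adjoint_works[OF linA, of "xp a - xp d" "yp d - yp a"] by (simp add: inner_commute)
    also have "A (xp a - xp d) = 0" using xA that linA by (simp add: linear_diff)
    finally show ?thesis using e by simp
  qed
  have PI: "inner (sp m0) (xp m1) \<le> \<nu> * m0 \<and> inner (sp m1) (xp m0) \<le> \<nu> * m0"
    if m: "0 < m1" "m1 \<le> m0" for m0 m1
    using N.path_ineq[OF xQ xQ m sg sg orth] m by auto
  have spK: "sp m \<in> dual_cone K" if "m > 0" for m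
    unfolding dual_cone_def
  proof (intro CollectI ballI)
    fix y assume "y \<in> K"
    then have "inner (gF (xp m)) y \<le> 0" using N.recession xQ that by blast
    then show "0 \<le> inner (sp m) y" using sg[OF that] that by (simp add: mult_le_0_iff)
  qed
  have spx0: "0 \<le> inner (sp m) (xp m')" if "m > 0" "m' > 0" for m m'
    using spK[OF that(1)] xQ[OF that(2)] N.QK unfolding dual_cone_def by blast
  have hFs_rel: "(m^2) *\<^sub>R hF (xp m) (hFs (sp m) w) = w" if m: "m > 0" for m w
  proof -
    define z where "z = (1/m) *\<^sub>R xp m"
    have zQ: "z \<in> interior K" unfolding z_def using N.Q_scale[OF xQ[OF m]] m by simp
    have gz: "- gF z = sp m" unfolding z_def using N.g_hom'[OF xQ[OF m], of "1/m"] sg[OF m] m by simp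
    have hz: "\<And>v. hF z v = (m^2) *\<^sub>R hF (xp m) v"
      unfolding z_def using N.h_hom[OF xQ[OF m], of "1/m"] m by (simp add: power_one_over)
    obtain v where v: "w = hF z v" using N.h_surj[OF zQ] by (metis surj_def)
    have "hFs (sp m) w = v" using N.hFs_eq[OF dual_def dual_grad dual_hess zQ, of v] v gz by simp
    then show ?thesis using v hz by simp
  qed
  have x1: "xp 1 \<in> interior K" using xQ by simp
  let ?B = "hF (xp 1)"
  have Bsurj: "surj ?B" using N.h_surj[OF x1] .
  have Binv: "?B (inv ?B w) = w" for w using Bsurj by (simp add: surj_f_inv_f)
  have part1a: "sqrt (inner (hF (xp m0) (xp m1)) (xp m1)) \<le> \<nu>" if m: "0 < m1" "m1 \<le> m0" for m0 m1
  proof -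
    have m0: "m0 > 0" using m by simp
    have "sqrt (inner (hF (xp m0) (xp m1)) (xp m1)) \<le> - inner (gF (xp m0)) (xp m1)"
      using N.key[OF xQ[OF m0]] xQ[OF m(1)] N.QK by auto
    also have "\<dots> = inner (sp m0) (xp m1) / m0" using sg[OF m0] m0 by simp
    also have "\<dots> \<le> \<nu>" using PI[OF m] m0 by (simp add: pos_divide_le_eq mult.commute)
    finally show ?thesis .
  qed
  have part1b: "sqrt (inner (hFs (sp m0) (sp m1)) (sp m1)) \<le> \<nu>" if m: "0 < m1" "m1 \<le> m0" for m0 m1
  proof -
    have m0: "m0 > 0" using m by simp
    define v where "v = hFs (sp m0) (sp m1)"
    have hv: "(m0^2) *\<^sub>R hF (xp m0) v = sp m1" using hFs_rel[OF m0] unfolding v_def .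
    define q where "q = inner (hF (xp m0) v) v"
    have q0: "q \<ge> 0" unfolding q_def using N.psd xQ[OF m0] by simp
    have vs: "inner v (sp m1) = m0^2 * q" unfolding q_def using hv[symmetric] by (simp add: inner_commute)
    have "inner (sp m1) v \<le> inner (sp m1) (xp m0) * sqrt q"
      unfolding q_def using N.dikin_dual[OF xQ[OF m0] spK[OF m(1)]] .
    also have "\<dots> \<le> (\<nu> * m0) * sqrt q" using PI[OF m] q0 by (intro mult_right_mono) auto
    finally have "m0^2 * q \<le> \<nu> * m0 * sqrt q" using vs by (simp add: inner_commute)
    from sqrt_bound[OF _ q0 _ this] m0 nu0 have "sqrt (m0^2 * q) \<le> \<nu>" by simp
    then show ?thesis unfolding v_def[symmetric] using vs by (simp add: inner_commute)
  qed
  have xbound: "inner (?B (xp m)) (xp m) \<le> \<nu>^2" if m: "0 < m" "m \<le> 1" for m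
  proof -
    have "sqrt (inner (?B (xp m)) (xp m)) \<le> \<nu>" using part1a[OF m] .
    moreover have "0 \<le> inner (?B (xp m)) (xp m)" using N.psd[OF x1] .
    ultimately show ?thesis by (metis real_sqrt_le_iff real_sqrt_pow2 real_sqrt_ge_zero power_mono)
  qed
  have sbound: "inner (sp m) u \<le> \<nu> * sqrt (inner (?B u) u)" if m: "0 < m" "m \<le> 1" for m u
  proof -
    have "inner (sp m) u \<le> inner (sp m) (xp 1) * sqrt (inner (?B u) u)"
      using N.dikin_dual[OF x1 spK[OF m(1)]] .
    also have "\<dots> \<le> \<nu> * sqrt (inner (?B u) u)" using PI[OF m] m N.psd[OF x1] by (intro mult_right_mono) auto
    finally show ?thesis .
  qed
  have Bbl: "bounded_linear ?B" using N.hlin[OF x1] linear_conv_bounded_linear by blast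
  have part2: "op_norm_B ?B xs \<le> \<nu>" if lp: "limit_point_at0 xp xs" for xs
  proof -
    obtain m :: "nat \<Rightarrow> real" where m: "\<forall>k. 0 < m k" "m \<longlonglongrightarrow> 0" "(\<lambda>k. xp (m k)) \<longlonglongrightarrow> xs"
      using lp unfolding limit_point_at0_def by blast
    have ev: "eventually (\<lambda>k. m k < 1) sequentially" using m(2) by (rule order_tendstoD) simp
    have lim: "(\<lambda>k. inner (?B (xp (m k))) (xp (m k))) \<longlonglongrightarrow> inner (?B xs) xs"
      by (intro tendsto_intros bounded_linear.tendsto[OF Bbl] m(3))
    have "inner (?B xs) xs \<le> \<nu>^2"
      by (rule tendsto_upperbound[OF lim]) (use ev m(1) xbound in \<open>auto elim!: eventually_mono\<close>)
    from real_sqrt_le_mono[OF this] show ?thesis unfolding op_norm_B_def using nu0 by simp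
  qed
  have part3: "op_norm_B (inv ?B) ss \<le> \<nu>" if lp: "limit_point_at0 sp ss" for ss
  proof -
    obtain m :: "nat \<Rightarrow> real" where m: "\<forall>k. 0 < m k" "m \<longlonglongrightarrow> 0" "(\<lambda>k. sp (m k)) \<longlonglongrightarrow> ss"
      using lp unfolding limit_point_at0_def by blast
    have ev: "eventually (\<lambda>k. m k < 1) sequentially" using m(2) by (rule order_tendstoD) simp
    define u where "u = inv ?B ss"
    have lim: "(\<lambda>k. inner (sp (m k)) u) \<longlonglongrightarrow> inner ss u"
      by (intro tendsto_intros m(3))
    have le: "inner ss u \<le> \<nu> * sqrt (inner (?B u) u)"
      by (rule tendsto_upperbound[OF lim]) (use ev m(1) sbound in \<open>auto elim!: eventually_mono\<close>)
    have Bu: "?B u = ss" unfolding u_def by (rule Binv)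
    define q where "q = inner (?B u) u"
    have q0: "q \<ge> 0" unfolding q_def using N.psd[OF x1] .
    have "1^2 * q \<le> \<nu> * 1 * sqrt q" using le Bu unfolding q_def by (simp add: inner_commute)
    from sqrt_bound[OF _ q0 _ this] nu0 have "sqrt q \<le> \<nu>" by simp
    moreover have "inner (inv ?B ss) ss = q" unfolding q_def using Bu u_def by (simp add: inner_commute)
    ultimately show ?thesis unfolding op_norm_B_def by simp
  qed
  have qscale: "\<And>x c u. x \<in> interior K \<Longrightarrow> inner (hF x (c *\<^sub>R u)) (c *\<^sub>R u) = c^2 * inner (hF x u) u"
    using N.hq_scale by blast
  have L1: "inner (?B u) u \<le> 2 * \<nu>^2 * inner (hF (xp m) u) u" if m: "0 < m" "m \<le> 1" for m u
  proof (rule quad_scale[where pa = "\<lambda>u. inner (hF (xp m) u) u" and pb = "\<lambda>u. inner (?B u) u"])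
    show "\<And>c u. inner (hF (xp m) (c *\<^sub>R u)) (c *\<^sub>R u) = c^2 * inner (hF (xp m) u) u"
      using qscale xQ m by blast
    show "\<And>c u. inner (?B (c *\<^sub>R u)) (c *\<^sub>R u) = c^2 * inner (?B u) u" using qscale x1 by blast
    show "\<And>u. 0 \<le> inner (hF (xp m) u) u" using N.psd xQ m by blast
    fix u assume u: "inner (hF (xp m) u) u < 1"
    have p: "xp m + u \<in> interior K" using N.dikin[OF xQ[OF m(1)] u] .
    have "inner (hF (xp m) (- u)) (- u) < 1" using u N.hlin[OF xQ[OF m(1)]] by (simp add: linear_neg)
    from N.dikin[OF xQ[OF m(1)] this] have mm: "xp m - u \<in> interior K" by simp
    have "inner (?B u) u \<le> 2 * (inner (- gF (xp 1)) (xp m))^2"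
      using N.two_sided[OF x1 xQ[OF m(1)] p mm] .
    moreover have "- gF (xp 1) = sp 1" using sg[of 1] by simp
    moreover have "(inner (sp 1) (xp m))^2 \<le> \<nu>^2"
      using PI[of m 1] m spx0[of 1 m] by (intro power_mono) auto
    ultimately show "inner (?B u) u \<le> 2 * \<nu>^2" by simp
  qed
  have L2: "inner (hF (xp m) u) u \<le> 2 * \<nu>^2 / m^2 * inner (?B u) u" if m: "0 < m" "m \<le> 1" for m u
  proof (rule quad_scale[where pb = "\<lambda>u. inner (hF (xp m) u) u" and pa = "\<lambda>u. inner (?B u) u"])
    show "\<And>c u. inner (hF (xp m) (c *\<^sub>R u)) (c *\<^sub>R u) = c^2 * inner (hF (xp m) u) u"
      using qscale xQ m by blast
    show "\<And>c u. inner (?B (c *\<^sub>R u)) (c *\<^sub>R u) = c^2 * inner (?B u) u" using qscale x1 by blast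
    show "\<And>u. 0 \<le> inner (?B u) u" using N.psd x1 by blast
    fix u assume u: "inner (?B u) u < 1"
    have p: "xp 1 + u \<in> interior K" using N.dikin[OF x1 u] .
    have "inner (?B (- u)) (- u) < 1" using u N.hlin[OF x1] by (simp add: linear_neg)
    from N.dikin[OF x1 this] have mm: "xp 1 - u \<in> interior K" by simp
    have "inner (hF (xp m) u) u \<le> 2 * (inner (- gF (xp m)) (xp 1))^2"
      using N.two_sided[OF xQ[OF m(1)] x1 p mm] .
    also have "inner (- gF (xp m)) (xp 1) = inner (sp m) (xp 1) / m" using sg[OF m(1)] m by simp
    also have "2 * (inner (sp m) (xp 1) / m)^2 \<le> 2 * (\<nu> / m)^2"
      using PI[of m 1] m spx0[of m 1] by (intro mult_left_mono power_mono divide_right_mono) auto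
    finally show "inner (hF (xp m) u) u \<le> 2 * \<nu>^2 / m^2" by (simp add: power_divide)
  qed
  have part4: "loewner_le (\<lambda>u. (1 / (4 * \<nu>\<^sup>2)) *\<^sub>R ?B u) (hF (xp m))
          \<and> loewner_le (hF (xp m)) (\<lambda>u. (4 * \<nu>\<^sup>2 / m\<^sup>2) *\<^sub>R ?B u)
          \<and> loewner_le (\<lambda>u. (1 / (4 * \<nu>\<^sup>2)) *\<^sub>R inv ?B u) (hFs (sp m))
          \<and> loewner_le (hFs (sp m)) (\<lambda>u. (4 * \<nu>\<^sup>2 / m\<^sup>2) *\<^sub>R inv ?B u)" if m: "0 < m" "m \<le> 1" for m
  proof (intro conjI)
    have n2: "\<nu>^2 > 0" using nu0 by simp
    have m2: "m^2 > 0" using m by simp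
    show "loewner_le (\<lambda>u. (1 / (4 * \<nu>\<^sup>2)) *\<^sub>R ?B u) (hF (xp m))" unfolding loewner_le_def
    proof
      fix u
      have qm: "0 \<le> inner (hF (xp m) u) u" using N.psd xQ m by blast
      have "inner ((1 / (4 * \<nu>\<^sup>2)) *\<^sub>R ?B u) u = inner (?B u) u / (4 * \<nu>^2)" by simp
      also have "\<dots> \<le> 2 * \<nu>^2 * inner (hF (xp m) u) u / (4 * \<nu>^2)"
        using L1[OF m] n2 by (intro divide_right_mono) auto
      also have "\<dots> = inner (hF (xp m) u) u / 2" using n2 by simp
      also have "\<dots> \<le> inner (hF (xp m) u) u" using qm by simp
      finally show "inner ((1 / (4 * \<nu>\<^sup>2)) *\<^sub>R ?B u) u \<le> inner (hF (xp m) u) u" .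
    qed
    show "loewner_le (hF (xp m)) (\<lambda>u. (4 * \<nu>\<^sup>2 / m\<^sup>2) *\<^sub>R ?B u)" unfolding loewner_le_def
    proof
      fix u
      have qB: "0 \<le> inner (?B u) u" using N.psd x1 by blast
      have "inner (hF (xp m) u) u \<le> 2 * \<nu>^2 / m^2 * inner (?B u) u" using L2[OF m] .
      also have "\<dots> \<le> 4 * \<nu>^2 / m^2 * inner (?B u) u"
        using qB n2 m2 by (intro mult_right_mono divide_right_mono) auto
      finally show "inner (hF (xp m) u) u \<le> inner ((4 * \<nu>\<^sup>2 / m\<^sup>2) *\<^sub>R ?B u) u" by simp
    qed
    let ?H = "\<lambda>v. (m^2) *\<^sub>R hF (xp m) v"
    have lH: "linear ?H" using N.hlin[OF xQ[OF m(1)]] by (intro linear_compose_scale_right)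
    have sH: "\<And>a d. inner (?H a) d = inner (?H d) a" using N.h_sym[OF xQ[OF m(1)]] by simp
    have pH: "\<And>a. 0 \<le> inner (?H a) a" using N.psd[OF xQ[OF m(1)]] by simp
    have lB: "linear ?B" using N.hlin[OF x1] .
    have sB: "\<And>a d. inner (?B a) d = inner (?B d) a" using N.h_sym[OF x1] by simp
    have pB: "\<And>a. 0 \<le> inner (?B a) a" using N.psd[OF x1] .
    show "loewner_le (\<lambda>u. (1 / (4 * \<nu>\<^sup>2)) *\<^sub>R inv ?B u) (hFs (sp m))" unfolding loewner_le_def
    proof
      fix w
      have le: "\<And>a. inner (?H a) a \<le> (2 * \<nu>^2) * inner (?B a) a"
      proof -
        fix a
        have "inner (?H a) a = m^2 * inner (hF (xp m) a) a" by simp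
        also have "\<dots> \<le> m^2 * (2 * \<nu>^2 / m^2 * inner (?B a) a)" using L2[OF m] m2 by (intro mult_left_mono) auto
        also have "\<dots> = (2 * \<nu>^2) * inner (?B a) a" using m2 by simp
        finally show "inner (?H a) a \<le> (2 * \<nu>^2) * inner (?B a) a" .
      qed
      have inv1: "inner w (inv ?B w) \<le> (2 * \<nu>^2) * inner w (hFs (sp m) w)"
        by (rule inversion[OF lH lB sH pH _ le hFs_rel[OF m(1)] Binv]) (use n2 in simp)
      have v0: "0 \<le> inner w (hFs (sp m) w)"
        using pH[of "hFs (sp m) w"] hFs_rel[OF m(1), of w] by simp
      have "inner ((1 / (4 * \<nu>\<^sup>2)) *\<^sub>R inv ?B w) w = inner w (inv ?B w) / (4 * \<nu>^2)"
        by (simp add: inner_commute)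
      also have "\<dots> \<le> (2 * \<nu>^2) * inner w (hFs (sp m) w) / (4 * \<nu>^2)"
        using inv1 n2 by (intro divide_right_mono) auto
      also have "\<dots> = inner w (hFs (sp m) w) / 2" using n2 by simp
      also have "\<dots> \<le> inner (hFs (sp m) w) w" using v0 by (simp add: inner_commute)
      finally show "inner ((1 / (4 * \<nu>\<^sup>2)) *\<^sub>R inv ?B w) w \<le> inner (hFs (sp m) w) w" .
    qed
    show "loewner_le (hFs (sp m)) (\<lambda>u. (4 * \<nu>\<^sup>2 / m\<^sup>2) *\<^sub>R inv ?B u)" unfolding loewner_le_def
    proof
      fix w
      have le: "\<And>a. inner (?B a) a \<le> (2 * \<nu>^2 / m^2) * inner (?H a) a"
      proof -
        fix a
        have "inner (?B a) a \<le> 2 * \<nu>^2 * inner (hF (xp m) a) a" using L1[OF m] .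
        also have "\<dots> = (2 * \<nu>^2 / m^2) * inner (?H a) a" using m2 by simp
        finally show "inner (?B a) a \<le> (2 * \<nu>^2 / m^2) * inner (?H a) a" .
      qed
      have inv2: "inner w (hFs (sp m) w) \<le> (2 * \<nu>^2 / m^2) * inner w (inv ?B w)"
        by (rule inversion[OF lB lH sB pB _ le Binv hFs_rel[OF m(1)]]) (use n2 m2 in simp)
      have u0: "0 \<le> inner w (inv ?B w)" using pB[of "inv ?B w"] Binv[of w] by simp
      have "inner (hFs (sp m) w) w \<le> (2 * \<nu>^2 / m^2) * inner w (inv ?B w)"
        using inv2 by (simp add: inner_commute)
      also have "\<dots> \<le> (4 * \<nu>^2 / m^2) * inner w (inv ?B w)"
        using u0 n2 m2 by (intro mult_right_mono divide_right_mono) auto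
      also have "\<dots> = inner ((4 * \<nu>\<^sup>2 / m\<^sup>2) *\<^sub>R inv ?B w) w" by (simp add: inner_commute)
      finally show "inner (hFs (sp m) w) w \<le> inner ((4 * \<nu>\<^sup>2 / m\<^sup>2) *\<^sub>R inv ?B w) w" .
    qed
  qed
  show ?thesis
    unfolding local_norm_def
    using part1a part1b part2 part3 part4 by blast
qed

end
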